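(* Let $\mu$ be a probability measure on $[0,1]$ and let $K(n)=\int_0^1(1-x)^{n-1}x\,\mathrm{d}\mu(x)$ for $n\ge1$, $K(\{\infty\})=\mu(\{0\})$. Then for every $\beta\in\mathbf{R}$ there exists a probability measure $\nu_\beta$ on $\mathbf{R}$ such that $$s_{\nu_\beta}(z)\left(e^\beta s_\mu(1-z)-\frac{1-e^\beta}{1-z}\right)=\frac{1}{z(1-z)}\qquad(z\in\mathbf{C}_+),$$ equivalently $s_{\nu_\beta}(z)=\left(-z-e^\beta\int_0^1\frac{zx}{1-z-x}\mathrm{d}\mu(x)\right)^{-1}$, and for all $N\ge0$, $$Z_{N,\beta}=\int_{\mathbf{R}}x^N\,\mathrm{d}\nu_\beta(x).$$
   Context: Renewal process $\tau=\{\tau_i:i\ge0\}$ with law $\mathbf{P}$: $\tau_0=0$, $\tau_n=\eta_1+\dots+\eta_n$, $(\eta_i)$ i.i.d. with law $K$ on $\mathbf{N}\cup\{\infty\}$. For $N\ge1$, $\mathcal{N}_N(\tau)=|\{1,\dots,N\}\cap\tau|$, and the partition function is $Z_{N,\beta}=E_{\mathbf{P}}\left[\exp(\beta\mathcal{N}_N(\tau))\mathbf{1}_{N\in\tau}\right]$, with $Z_{0,\beta}=1$. Stieltjes transform: $s_\mu(z)=\int\frac{\mathrm{d}\mu(x)}{x-z}$, $z\in\mathbf{C}_+$. *)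

theory Defs
  imports "HOL-Probability.Probability"
begin

definition renewal_K :: "real measure \<Rightarrow> enat \<Rightarrow> real" where
  "renewal_K mu t =
     (if t = \<infinity> then measure mu {0}
      else if the_enat t \<ge> 1
           then (\<integral>x. (1 - x) ^ (the_enat t - 1) * x \<partial>mu)
           else 0)"

definition inter_law :: "real measure \<Rightarrow> enat measure" where
  "inter_law mu = density (count_space UNIV) (\<lambda>t. ennreal (renewal_K mu t))"

text \<open>Law P of the i.i.d. sequence of inter-arrival times eta_1, eta_2, ...
  (coordinate 0 is unused).\<close>
definition renewal_space :: "real measure \<Rightarrow> (nat \<Rightarrow> enat) measure" where
  "renewal_space mu = PiM UNIV (\<lambda>_::nat. inter_law mu)"

definition renewal_tau :: "(nat \<Rightarrow> enat) \<Rightarrow> nat \<Rightarrow> enat" where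
  "renewal_tau \<omega> n = (\<Sum>i\<in>{1..n}. \<omega> i)"

definition renewal_count :: "nat \<Rightarrow> (nat \<Rightarrow> enat) \<Rightarrow> nat" where
  "renewal_count N \<omega> = card {k \<in> {1..N}. \<exists>i. renewal_tau \<omega> i = enat k}"

definition partition_fn :: "real measure \<Rightarrow> real \<Rightarrow> nat \<Rightarrow> real" where
  "partition_fn mu \<beta> N =
     (if N = 0 then 1
      else (\<integral>\<omega>. exp (\<beta> * real (renewal_count N \<omega>)) *
                  indicator {\<omega>. \<exists>i. renewal_tau \<omega> i = enat N} \<omega> \<partial>renewal_space mu))"

definition stieltjes :: "real measure \<Rightarrow> complex \<Rightarrow> complex" where
  "stieltjes m z = (\<integral>x. 1 / (complex_of_real x - z) \<partial>m)"

end

theory Submission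
  imports Defs "HOL-Computational_Algebra.Polynomial"
begin


definition Tsum :: "(nat \<Rightarrow> enat) \<Rightarrow> nat \<Rightarrow> enat" where
  "Tsum X n = (\<Sum>i<n. X i)"

lemma tau_Tsum: "renewal_tau \<omega> n = Tsum (\<lambda>i. \<omega> (Suc i)) n"
  unfolding renewal_tau_def Tsum_def
  by (induction n) (auto simp: add.commute)

lemma Tsum_0[simp]: "Tsum X 0 = 0" by (simp add: Tsum_def)

lemma Tsum_Suc: "Tsum X (Suc i) = Tsum X i + X i" by (simp add: Tsum_def)

lemma Tsum_case_Suc: "Tsum (case_nat y X) (Suc i) = y + Tsum X i"
  by (induction i) (auto simp: Tsum_Suc add.assoc)

definition hits :: "(nat \<Rightarrow> enat) \<Rightarrow> nat \<Rightarrow> bool" where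
  "hits X k = (\<exists>i. Tsum X i = enat k)"

lemma hits_0[simp]: "hits X 0"
  unfolding hits_def by (rule exI[of _ 0]) (simp add: zero_enat_def)

lemma hits_case_enat:
  "hits (case_nat (enat n) X) k \<longleftrightarrow> k = 0 \<or> (n \<le> k \<and> hits X (k - n))"
proof
  assume "hits (case_nat (enat n) X) k"
  then obtain i where i: "Tsum (case_nat (enat n) X) i = enat k" by (auto simp: hits_def)
  show "k = 0 \<or> (n \<le> k \<and> hits X (k - n))"
  proof (cases i)
    case 0 then show ?thesis using i by (simp add: zero_enat_def)
  next
    case (Suc j)
    with i have e: "enat n + Tsum X j = enat k" by (simp add: Tsum_case_Suc)
    then obtain m where m: "Tsum X j = enat m" by (cases "Tsum X j") auto
    with e have "n + m = k" by simp
    with m show ?thesis by (auto simp: hits_def)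
  qed
next
  assume "k = 0 \<or> (n \<le> k \<and> hits X (k - n))"
  then show "hits (case_nat (enat n) X) k"
  proof
    assume "k = 0" then show ?thesis by simp
  next
    assume a: "n \<le> k \<and> hits X (k - n)"
    then obtain j where "Tsum X j = enat (k - n)" by (auto simp: hits_def)
    then have "Tsum (case_nat (enat n) X) (Suc j) = enat k"
      using a by (simp add: Tsum_case_Suc)
    then show ?thesis by (auto simp: hits_def)
  qed
qed

lemma hits_case_inf: "hits (case_nat \<infinity> X) k \<longleftrightarrow> k = 0"
proof
  assume "hits (case_nat \<infinity> X) k"
  then obtain i where i: "Tsum (case_nat \<infinity> X) i = enat k" by (auto simp: hits_def)
  then show "k = 0" by (cases i) (auto simp: Tsum_case_Suc zero_enat_def)
qed simp

definition Wf :: "real \<Rightarrow> nat \<Rightarrow> (nat \<Rightarrow> enat) \<Rightarrow> real" where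
  "Wf \<beta> N X = exp (\<beta> * real (card {k\<in>{1..N}. hits X k})) * (if hits X N then 1 else 0)"

lemma Wf_nonneg: "0 \<le> Wf \<beta> N X" by (simp add: Wf_def)

lemma card_shift:
  assumes "1 \<le> n" "n \<le> N"
  shows "card {k\<in>{1..N}. hits (case_nat (enat n) X) k} = Suc (card {j\<in>{1..N-n}. hits X j})"
proof -
  have "{k\<in>{1..N}. hits (case_nat (enat n) X) k} = (\<lambda>j. j + n) ` {j\<in>{0..N-n}. hits X j}"
  proof (intro set_eqI iffI)
    fix k assume "k \<in> {k\<in>{1..N}. hits (case_nat (enat n) X) k}"
    then have "k \<in> {1..N}" "n \<le> k" "hits X (k - n)" using assms by (auto simp: hits_case_enat)
    then show "k \<in> (\<lambda>j. j + n) ` {j\<in>{0..N-n}. hits X j}"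
      by (intro image_eqI[of _ _ "k - n"]) auto
  next
    fix k assume "k \<in> (\<lambda>j. j + n) ` {j\<in>{0..N-n}. hits X j}"
    then show "k \<in> {k\<in>{1..N}. hits (case_nat (enat n) X) k}"
      using assms by (auto simp: hits_case_enat)
  qed
  then have "card {k\<in>{1..N}. hits (case_nat (enat n) X) k} = card {j\<in>{0..N-n}. hits X j}"
    by (simp add: card_image inj_on_def)
  also have "{j\<in>{0..N-n}. hits X j} = insert 0 {j\<in>{1..N-n}. hits X j}" by auto
  also have "card \<dots> = Suc (card {j\<in>{1..N-n}. hits X j})" by simp
  finally show ?thesis .
qed

lemma Wf_case_enat:
  assumes "1 \<le> n" "n \<le> N"
  shows "Wf \<beta> N (case_nat (enat n) X) = exp \<beta> * (if n = N then 1 else Wf \<beta> (N - n) X)"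
proof -
  have h: "hits (case_nat (enat n) X) N \<longleftrightarrow> hits X (N - n)"
    using assms by (simp add: hits_case_enat)
  show ?thesis
  proof (cases "n = N")
    case True
    then show ?thesis using card_shift[OF assms, of X] h by (simp add: Wf_def)
  next
    case False
    then show ?thesis using card_shift[OF assms, of X] h
      by (simp add: Wf_def distrib_left exp_add)
  qed
qed

lemma Wf_case_big:
  assumes "N < n" "1 \<le> N"
  shows "Wf \<beta> N (case_nat (enat n) X) = 0"
  using assms by (simp add: Wf_def hits_case_enat)

lemma Wf_case_inf:
  assumes "1 \<le> N"
  shows "Wf \<beta> N (case_nat \<infinity> X) = 0"
  using assms by (simp add: Wf_def hits_case_inf)

lemma Wf_case_Suc: "Wf \<beta> N (\<lambda>i. case_nat y X (Suc i)) = Wf \<beta> N X"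
  by simp

lemma measurable_Tsum:
  assumes "sets M = sets (count_space UNIV)"
  shows "(\<lambda>X. Tsum X i) \<in> measurable (PiM UNIV (\<lambda>_. M)) (count_space UNIV)"
proof (induction i)
  case 0 then show ?case by simp
next
  case (Suc i)
  have c: "(\<lambda>X. X i) \<in> measurable (PiM UNIV (\<lambda>_. M)) (count_space UNIV)"
  proof -
    have "(\<lambda>X. X i) \<in> measurable (PiM UNIV (\<lambda>_. M)) M" by (rule measurable_component_singleton) simp
    then show ?thesis using measurable_cong_sets[OF refl assms] by blast
  qed
  have "(\<lambda>X. (Tsum X i, X i)) \<in> measurable (PiM UNIV (\<lambda>_. M)) (count_space UNIV \<Otimes>\<^sub>M count_space UNIV)"
    using Suc c by (rule measurable_Pair)
  then have p: "(\<lambda>X. (Tsum X i, X i)) \<in> measurable (PiM UNIV (\<lambda>_. M)) (count_space (UNIV::(enat\<times>enat) set))"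
    by (simp add: pair_measure_countable)
  have "(\<lambda>(a,b). a + b) \<in> measurable (count_space (UNIV::(enat\<times>enat) set)) (count_space UNIV)"
    by simp
  from measurable_comp[OF p this] show ?case by (simp add: Tsum_Suc o_def)
qed

lemma pred_hits:
  assumes "sets M = sets (count_space UNIV)"
  shows "Measurable.pred (PiM UNIV (\<lambda>_. M)) (\<lambda>X. hits X k)"
  unfolding hits_def
proof (intro pred_intros_countable)
  fix i
  show "Measurable.pred (PiM UNIV (\<lambda>_. M)) (\<lambda>X. Tsum X i = enat k)"
    using measurable_Tsum[OF assms, of i] by (intro pred_eq_const1) auto
qed

lemma card_as_sum: "finite A \<Longrightarrow> real (card {k\<in>A. P k}) = (\<Sum>k\<in>A. if P k then 1 else 0)"
  by (simp add: sum.If_cases Int_def)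

lemma measurable_Wf:
  assumes "sets M = sets (count_space UNIV)"
  shows "Wf \<beta> N \<in> borel_measurable (PiM UNIV (\<lambda>_. M))"
proof -
  have [measurable]: "Measurable.pred (PiM UNIV (\<lambda>_. M)) (\<lambda>X. hits X k)" for k
    using pred_hits[OF assms] .
  have e: "Wf \<beta> N = (\<lambda>X. exp (\<beta> * (\<Sum>k\<in>{1..N}. if hits X k then 1 else 0)) * (if hits X N then 1 else 0))"
    by (rule ext) (simp only: Wf_def card_as_sum[OF finite_atLeastAtMost])
  show ?thesis unfolding e by measurable
qed


locale rmu =
  fixes mu :: "real measure"
  assumes P: "prob_space mu" and S: "sets mu = sets borel" and U: "emeasure mu {0..1} = 1"
begin

interpretation m: prob_space mu by (rule P)

lemma AE01: "AE x in mu. 0 \<le> x \<and> x \<le> 1"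
proof -
  have "measure mu {0..1} = 1" using U by (simp add: m.emeasure_eq_measure)
  then have "AE x in mu. x \<in> {0..1}" by (rule m.AE_prob_1)
  then show ?thesis by simp
qed

lemma meas_borel[measurable_cong]: "sets mu = sets borel" by (rule S)

lemma integrable_bdd:
  fixes f :: "real \<Rightarrow> 'b::{banach, second_countable_topology}"
  assumes "f \<in> borel_measurable borel" "\<And>x. 0 \<le> x \<Longrightarrow> x \<le> 1 \<Longrightarrow> norm (f x) \<le> B"
  shows "integrable mu f"
proof -
  have "integrable mu (\<lambda>_. B)" by simp
  moreover have "f \<in> borel_measurable mu" using assms(1) by (simp add: measurable_cong_sets[OF S refl])
  moreover have "AE x in mu. norm (f x) \<le> norm B"
    using AE01 by eventually_elim (use assms(2) in force)
  ultimately show ?thesis by (rule Bochner_Integration.integrable_bound)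
qed

lemma K_simps:
  "renewal_K mu \<infinity> = measure mu {0}"
  "renewal_K mu (enat 0) = 0"
  "renewal_K mu (enat (Suc m)) = (\<integral>x. (1 - x) ^ m * x \<partial>mu)"
  by (auto simp: renewal_K_def)

lemma K_nonneg: "0 \<le> renewal_K mu t"
proof -
  have "0 \<le> (\<integral>x. (1 - x) ^ m * x \<partial>mu)" for m
    by (rule integral_nonneg_AE) (use AE01 in \<open>eventually_elim, auto\<close>)
  then show ?thesis
    by (cases t) (auto simp: renewal_K_def)
qed

lemma integrable_geo: "integrable mu (\<lambda>x. (1 - x) ^ m * x)"
proof (rule integrable_bdd[where B=1])
  fix x :: real assume "0 \<le> x" "x \<le> 1"
  then show "norm ((1 - x) ^ m * x) \<le> 1"
    by (simp add: abs_mult power_le_one mult_le_one)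
qed simp

lemma geo_sums:
  fixes x :: real assumes "0 < x" "x \<le> 1"
  shows "(\<lambda>n. if n = 0 then 0 else (1 - x) ^ (n - 1) * x) sums 1"
proof -
  have "(\<lambda>n. (1 - x) ^ n) sums (1 / (1 - (1 - x)))"
    by (rule geometric_sums) (use assms in auto)
  then have "(\<lambda>n. (1 - x) ^ n * x) sums (1 / (1 - (1 - x)) * x)" by (rule sums_mult2)
  then have "(\<lambda>n. (1 - x) ^ n * x) sums 1" using assms by simp
  then have "(\<lambda>n. (\<lambda>n. if n = 0 then 0 else (1 - x) ^ (n - 1) * x) (Suc n)) sums 1" by simp
  from sums_Suc_iff[THEN iffD1, OF this] show ?thesis by simp
qed

lemma nn_count_enat:
  "(\<integral>\<^sup>+t. g t \<partial>count_space (UNIV::enat set)) = g \<infinity> + (\<integral>\<^sup>+n. g (enat n) \<partial>count_space UNIV)"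
proof -
  have "(\<integral>\<^sup>+t. g t \<partial>count_space (UNIV::enat set)) =
        (\<integral>\<^sup>+t. g t * indicator {\<infinity>} t + g t * indicator (range enat) t \<partial>count_space UNIV)"
    by (intro nn_integral_cong) (auto simp: indicator_def)
  also have "\<dots> = (\<integral>\<^sup>+t. g t * indicator {\<infinity>} t \<partial>count_space UNIV) +
      (\<integral>\<^sup>+t. g t * indicator (range enat) t \<partial>count_space UNIV)"
    by (rule nn_integral_add) auto
  also have "(\<integral>\<^sup>+t. g t * indicator {\<infinity>} t \<partial>count_space UNIV) = g \<infinity>"
    by (subst nn_integral_count_space'[of "{\<infinity>}"]) auto
  also have "(\<integral>\<^sup>+t. g t * indicator (range enat) t \<partial>count_space UNIV) =
      (\<integral>\<^sup>+t. g t \<partial>count_space (range enat))"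
    by (simp add: nn_integral_count_space_indicator)
  also have "\<dots> = (\<integral>\<^sup>+n. g (enat n) \<partial>count_space UNIV)"
    by (rule nn_integral_bij_count_space[symmetric]) (auto simp: bij_betw_def inj_on_def)
  finally show ?thesis .
qed

lemma K_total: "(\<integral>\<^sup>+t. ennreal (renewal_K mu t) \<partial>count_space UNIV) = 1"
proof -
  define g where "g n x = (if n = 0 then 0 else (1 - x) ^ (n - 1) * x)" for n :: nat and x :: real
  have Kg: "ennreal (renewal_K mu (enat n)) = (\<integral>\<^sup>+x. ennreal (g n x) \<partial>mu)" for n
  proof (cases n)
    case 0 then show ?thesis by (simp add: g_def renewal_K_def)
  next
    case (Suc m)
    have "ennreal (renewal_K mu (enat n)) = ennreal (\<integral>x. (1 - x) ^ m * x \<partial>mu)"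
      using Suc by (simp add: K_simps)
    also have "\<dots> = (\<integral>\<^sup>+x. ennreal ((1 - x) ^ m * x) \<partial>mu)"
      by (rule nn_integral_eq_integral[symmetric, OF integrable_geo])
         (use AE01 in \<open>eventually_elim, auto\<close>)
    also have "\<dots> = (\<integral>\<^sup>+x. ennreal (g n x) \<partial>mu)" using Suc by (simp add: g_def)
    finally show ?thesis .
  qed
  have "(\<integral>\<^sup>+n. ennreal (renewal_K mu (enat n)) \<partial>count_space UNIV) = (\<Sum>n. \<integral>\<^sup>+x. ennreal (g n x) \<partial>mu)"
    by (simp add: nn_integral_count_space_nat Kg)
  also have "\<dots> = (\<integral>\<^sup>+x. (\<Sum>n. ennreal (g n x)) \<partial>mu)"
    by (rule nn_integral_suminf[symmetric]) (simp add: g_def measurable_cong_sets[OF S refl])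
  also have "\<dots> = (\<integral>\<^sup>+x. indicator {0<..1} x \<partial>mu)"
  proof (rule nn_integral_cong_AE)
    show "AE x in mu. (\<Sum>n. ennreal (g n x)) = indicator {0<..1} x"
      using AE01
    proof eventually_elim
      case (elim x)
      show ?case
      proof (cases "x = 0")
        case True
        then have "(\<lambda>n. ennreal (g n x)) = (\<lambda>n. 0)" by (auto simp: g_def fun_eq_iff)
        then show ?thesis using True by simp
      next
        case False
        then have "(\<lambda>n. g n x) sums 1" unfolding g_def using elim by (intro geo_sums) auto
        then have "(\<Sum>n. ennreal (g n x)) = ennreal 1"
          by (rule suminf_ennreal_eq[rotated]) (use elim in \<open>auto simp: g_def\<close>)
        then show ?thesis using False elim by simp
      qed
    qed
  qed
  also have "\<dots> = emeasure mu {0<..1}"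
    by (rule nn_integral_indicator) (simp add: S)
  finally have A: "(\<integral>\<^sup>+n. ennreal (renewal_K mu (enat n)) \<partial>count_space UNIV) = emeasure mu {0<..1}" .
  have "ennreal (renewal_K mu \<infinity>) = emeasure mu {0}"
    by (simp add: K_simps m.emeasure_eq_measure)
  then have "(\<integral>\<^sup>+t. ennreal (renewal_K mu t) \<partial>count_space UNIV) = emeasure mu {0} + emeasure mu {0<..1}"
    by (simp add: nn_count_enat A)
  also have "\<dots> = emeasure mu ({0} \<union> {0<..1})"
    by (rule plus_emeasure) (auto simp: S)
  also have "{0} \<union> {0<..1} = {0..(1::real)}" by auto
  finally show ?thesis using U by simp
qed

lemma prob_inter: "prob_space (inter_law mu)"
proof
  show "emeasure (inter_law mu) (space (inter_law mu)) = 1"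
    unfolding inter_law_def by (simp add: emeasure_density K_total)
qed

lemma sets_inter: "sets (inter_law mu) = sets (count_space UNIV)"
  by (simp add: inter_law_def)

end


context rmu begin

abbreviation "SS \<equiv> renewal_space mu"

lemma seq: "sequence_space (inter_law mu)"
  unfolding sequence_space_def product_prob_space_def product_sigma_finite_def product_prob_space_axioms_def
  using prob_inter by (auto intro: prob_space_imp_sigma_finite)

lemma prob_SS: "prob_space SS"
  unfolding renewal_space_def by (rule prob_space_PiM) (rule prob_inter)

lemma meas_Wf[measurable]: "Wf \<beta> N \<in> borel_measurable SS"
  unfolding renewal_space_def by (rule measurable_Wf[OF sets_inter])

lemma split_first:
  assumes [measurable]: "h \<in> borel_measurable SS"
  shows "(\<integral>\<^sup>+\<omega>. h \<omega> \<partial>SS) = (\<integral>\<^sup>+x. \<integral>\<^sup>+X. h (case_nat x X) \<partial>SS \<partial>inter_law mu)"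
proof -
  interpret Sq: sequence_space "inter_law mu" by (rule seq)
  interpret P: pair_sigma_finite "inter_law mu" "\<Pi>\<^sub>M i::nat\<in>UNIV. inter_law mu" ..
  have h: "h \<in> borel_measurable (\<Pi>\<^sub>M i::nat\<in>UNIV. inter_law mu)" using assms by (simp add: renewal_space_def)
  have "(\<integral>\<^sup>+\<omega>. h \<omega> \<partial>SS) = (\<integral>\<^sup>+\<omega>. h \<omega> \<partial>(\<Pi>\<^sub>M i::nat\<in>UNIV. inter_law mu))"
    by (simp add: renewal_space_def)
  also have "\<dots> = (\<integral>\<^sup>+X. h ((\<lambda>(s, \<omega>). case_nat s \<omega>) X) \<partial>(inter_law mu \<Otimes>\<^sub>M (\<Pi>\<^sub>M i::nat\<in>UNIV. inter_law mu)))"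
    by (subst Sq.PiM_iter[symmetric]) (simp add: nn_integral_distr h)
  also have "\<dots> = (\<integral>\<^sup>+x. \<integral>\<^sup>+X. h ((\<lambda>(s, \<omega>). case_nat s \<omega>) (x, X)) \<partial>(\<Pi>\<^sub>M i::nat\<in>UNIV. inter_law mu) \<partial>inter_law mu)"
  proof -
    have cm: "(\<lambda>(s,\<omega>). case_nat s \<omega>) \<in> measurable (inter_law mu \<Otimes>\<^sub>M (\<Pi>\<^sub>M i::nat\<in>UNIV. inter_law mu)) (\<Pi>\<^sub>M i::nat\<in>UNIV. inter_law mu)"
    proof -
      have "(\<lambda>x. case_nat (fst x) (snd x)) \<in> measurable (inter_law mu \<Otimes>\<^sub>M (\<Pi>\<^sub>M i::nat\<in>UNIV. inter_law mu)) (\<Pi>\<^sub>M i::nat\<in>UNIV. inter_law mu)"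
        by (rule measurable_case_nat') (rule measurable_fst, rule measurable_snd)
      moreover have "(\<lambda>(s,\<omega>). case_nat s \<omega>) = (\<lambda>x. case_nat (fst x) (snd x))" by (auto simp: fun_eq_iff split: nat.split)
      ultimately show ?thesis by simp
    qed
    have hc: "(\<lambda>X. h ((\<lambda>(s, \<omega>). case_nat s \<omega>) X)) \<in> borel_measurable (inter_law mu \<Otimes>\<^sub>M (\<Pi>\<^sub>M i::nat\<in>UNIV. inter_law mu))"
      using measurable_comp[OF cm h] by (simp add: o_def)
    have sf: "sigma_finite_measure (\<Pi>\<^sub>M i::nat\<in>UNIV. inter_law mu)"
      using prob_SS unfolding renewal_space_def by (rule prob_space_imp_sigma_finite)
    show ?thesis using sigma_finite_measure.nn_integral_fst[OF sf hc] by simp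
  qed
  finally show ?thesis by (simp add: renewal_space_def)
qed

lemma shift_int:
  "(\<integral>\<^sup>+\<omega>. ennreal (Wf \<beta> N (\<lambda>i. \<omega> (Suc i))) \<partial>SS) = (\<integral>\<^sup>+X. ennreal (Wf \<beta> N X) \<partial>SS)"
proof -
  interpret I: prob_space "inter_law mu" by (rule prob_inter)
  have m: "(\<lambda>\<omega>::nat\<Rightarrow>enat. \<lambda>i. \<omega> (Suc i)) \<in> measurable SS SS"
    unfolding renewal_space_def
    by (rule measurable_PiM_single') (auto intro: measurable_component_singleton simp: space_PiM)
  have [measurable]: "(\<lambda>\<omega>. ennreal (Wf \<beta> N (\<lambda>i. \<omega> (Suc i)))) \<in> borel_measurable SS"
    using measurable_comp[OF m meas_Wf] by (simp add: o_def)
  show ?thesis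
    by (subst split_first) (simp_all add: I.emeasure_space_1)
qed

lemma G_eval:
  assumes "1 \<le> n" "n \<le> N"
  shows "(\<integral>\<^sup>+X. ennreal (Wf \<beta> N (case_nat (enat n) X)) \<partial>SS) =
     ennreal (exp \<beta>) * (if n = N then 1 else (\<integral>\<^sup>+X. ennreal (Wf \<beta> (N - n) X) \<partial>SS))"
proof -
  have [measurable]: "(\<lambda>X. ennreal (Wf \<beta> (N - n) X)) \<in> borel_measurable SS" by measurable
  have sp: "emeasure SS (space SS) = 1" by (rule prob_space.emeasure_space_1[OF prob_SS])
  have "(\<integral>\<^sup>+X. ennreal (Wf \<beta> N (case_nat (enat n) X)) \<partial>SS) =
        (\<integral>\<^sup>+X. ennreal (exp \<beta>) * (if n = N then 1 else ennreal (Wf \<beta> (N - n) X)) \<partial>SS)"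
    by (intro nn_integral_cong) (simp add: Wf_case_enat[OF assms] ennreal_mult Wf_nonneg)
  also have "\<dots> = ennreal (exp \<beta>) * (if n = N then 1 else (\<integral>\<^sup>+X. ennreal (Wf \<beta> (N - n) X) \<partial>SS))"
  proof (cases "n = N")
    case True then show ?thesis by (simp add: sp)
  next
    case False then show ?thesis by (simp add: nn_integral_cmult)
  qed
  finally show ?thesis .
qed

lemma rec_int:
  assumes "1 \<le> N"
  shows "(\<integral>\<^sup>+X. ennreal (Wf \<beta> N X) \<partial>SS) =
    (\<Sum>n\<in>{1..N}. ennreal (exp \<beta> * renewal_K mu (enat n)) *
        (if n = N then 1 else (\<integral>\<^sup>+X. ennreal (Wf \<beta> (N - n) X) \<partial>SS)))"
proof -
  define G where "G x = (\<integral>\<^sup>+X. ennreal (Wf \<beta> N (case_nat x X)) \<partial>SS)" for x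
  have "(\<integral>\<^sup>+X. ennreal (Wf \<beta> N X) \<partial>SS) = (\<integral>\<^sup>+x. G x \<partial>inter_law mu)"
    unfolding G_def by (rule split_first) simp
  also have "\<dots> = (\<integral>\<^sup>+x. ennreal (renewal_K mu x) * G x \<partial>count_space UNIV)"
    unfolding inter_law_def by (rule nn_integral_density) simp_all
  also have "\<dots> = (\<Sum>x\<in>enat ` {1..N}. ennreal (renewal_K mu x) * G x)"
  proof (rule nn_integral_count_space')
    fix x :: enat assume "x \<notin> enat ` {1..N}"
    then consider "x = \<infinity>" | "x = enat 0" | n where "x = enat n" "N < n"
    proof (cases x)
      case (enat n)
      show ?thesis
      proof (cases "n = 0")
        case False
        then have "N < n" using \<open>x \<notin> enat ` {1..N}\<close> enat by (force simp: image_iff)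
        then show ?thesis using that enat by auto
      qed (use that enat in \<open>auto simp: zero_enat_def\<close>)
    qed (use that in auto)
    then show "ennreal (renewal_K mu x) * G x = 0"
    proof cases
      case 1 then show ?thesis using assms by (simp add: G_def Wf_case_inf)
    next
      case 2 then show ?thesis by (simp add: K_simps)
    next
      case 3 then show ?thesis using assms by (simp add: G_def Wf_case_big)
    qed
  qed auto
  also have "\<dots> = (\<Sum>n\<in>{1..N}. ennreal (renewal_K mu (enat n)) * G (enat n))"
    by (subst sum.reindex) (auto simp: inj_on_def)
  also have "\<dots> = (\<Sum>n\<in>{1..N}. ennreal (exp \<beta> * renewal_K mu (enat n)) *
        (if n = N then 1 else (\<integral>\<^sup>+X. ennreal (Wf \<beta> (N - n) X) \<partial>SS)))"
    by (intro sum.cong refl) (simp add: G_def G_eval ennreal_mult K_nonneg mult_ac)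
  finally show ?thesis .
qed

lemma int_fin: "1 \<le> N \<Longrightarrow> (\<integral>\<^sup>+X. ennreal (Wf \<beta> N X) \<partial>SS) < \<infinity>"
proof (induction N rule: less_induct)
  case (less N)
  show ?case
  proof -
    have "\<forall>n\<in>{1..N}. n \<noteq> N \<longrightarrow> (\<integral>\<^sup>+X. ennreal (Wf \<beta> (N - n) X) \<partial>SS) < \<infinity>"
      using less.IH by auto
    then show ?thesis
      by (subst rec_int[OF less.prems]) (auto simp: ennreal_sum_less_top ennreal_mult_less_top)
  qed
qed

lemma pf_as_int:
  assumes "1 \<le> N"
  shows "partition_fn mu \<beta> N = (\<integral>\<omega>. Wf \<beta> N (\<lambda>i. \<omega> (Suc i)) \<partial>SS)"
proof -
  have "partition_fn mu \<beta> N = (\<integral>\<omega>. exp (\<beta> * real (renewal_count N \<omega>)) *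
                  indicator {\<omega>. \<exists>i. renewal_tau \<omega> i = enat N} \<omega> \<partial>SS)"
    using assms by (simp add: partition_fn_def)
  also have "\<dots> = (\<integral>\<omega>. Wf \<beta> N (\<lambda>i. \<omega> (Suc i)) \<partial>SS)"
    by (intro Bochner_Integration.integral_cong refl)
       (simp add: Wf_def renewal_count_def hits_def tau_Tsum indicator_def)
  finally show ?thesis .
qed

lemma pf_ennreal: "ennreal (partition_fn mu \<beta> N) = (if N = 0 then 1 else (\<integral>\<^sup>+X. ennreal (Wf \<beta> N X) \<partial>SS))"
proof (cases "N = 0")
  case True then show ?thesis by (simp add: partition_fn_def)
next
  case False
  have m: "(\<lambda>\<omega>::nat\<Rightarrow>enat. \<lambda>i. \<omega> (Suc i)) \<in> measurable SS SS"
    unfolding renewal_space_def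
    by (rule measurable_PiM_single') (auto intro: measurable_component_singleton simp: space_PiM)
  have mm: "(\<lambda>\<omega>. Wf \<beta> N (\<lambda>i. \<omega> (Suc i))) \<in> borel_measurable SS"
    using measurable_comp[OF m meas_Wf] by (simp add: o_def)
  have "partition_fn mu \<beta> N = enn2real (\<integral>\<^sup>+\<omega>. ennreal (Wf \<beta> N (\<lambda>i. \<omega> (Suc i))) \<partial>SS)"
    using False by (simp add: pf_as_int integral_eq_nn_integral[OF mm] Wf_nonneg)
  also have "\<dots> = enn2real (\<integral>\<^sup>+X. ennreal (Wf \<beta> N X) \<partial>SS)" by (simp add: shift_int)
  finally show ?thesis using False int_fin[of N \<beta>] by (simp add: ennreal_enn2real_if) 
qed

lemma pf_nonneg: "0 \<le> partition_fn mu \<beta> N"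
  by (cases "N = 0") (auto simp: partition_fn_def intro!: integral_nonneg_AE)

lemma Z_rec:
  assumes "1 \<le> N"
  shows "partition_fn mu \<beta> N = (\<Sum>n\<in>{1..N}. exp \<beta> * renewal_K mu (enat n) * partition_fn mu \<beta> (N - n))"
proof -
  have "ennreal (partition_fn mu \<beta> N) =
    (\<Sum>n\<in>{1..N}. ennreal (exp \<beta> * renewal_K mu (enat n)) * ennreal (partition_fn mu \<beta> (N - n)))"
  proof -
    have "ennreal (partition_fn mu \<beta> N) = (\<integral>\<^sup>+X. ennreal (Wf \<beta> N X) \<partial>SS)"
      using assms by (simp add: pf_ennreal)
    also have "\<dots> = (\<Sum>n\<in>{1..N}. ennreal (exp \<beta> * renewal_K mu (enat n)) *
        (if n = N then 1 else (\<integral>\<^sup>+X. ennreal (Wf \<beta> (N - n) X) \<partial>SS)))" by (rule rec_int[OF assms])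
    also have "\<dots> = (\<Sum>n\<in>{1..N}. ennreal (exp \<beta> * renewal_K mu (enat n)) * ennreal (partition_fn mu \<beta> (N - n)))"
      by (intro sum.cong refl) (auto simp: pf_ennreal)
    finally show ?thesis .
  qed
  also have "\<dots> = ennreal (\<Sum>n\<in>{1..N}. exp \<beta> * renewal_K mu (enat n) * partition_fn mu \<beta> (N - n))"
    by (simp add: ennreal_mult K_nonneg pf_nonneg sum_ennreal[symmetric] sum_nonneg)
  finally show ?thesis
    by (subst (asm) ennreal_inj) (auto intro!: sum_nonneg mult_nonneg_nonneg pf_nonneg K_nonneg)
qed

end


locale core =
  fixes K :: "'i set" and t w :: "'i \<Rightarrow> real" and a M :: real
  assumes finK: "finite K" and injt: "inj_on t K" and wpos: "\<And>k. k \<in> K \<Longrightarrow> 0 < w k"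
    and tM: "\<And>k. k \<in> K \<Longrightarrow> \<bar>t k\<bar> \<le> M" and M0: "0 \<le> M"
begin

definition fr :: "real \<Rightarrow> real" where "fr x = x - a - (\<Sum>k\<in>K. w k / (x - t k))"
definition W where "W = (\<Sum>k\<in>K. w k)"
definition B where "B = M + 1 + \<bar>a\<bar> + W"

lemma W_nonneg: "0 \<le> W" unfolding W_def by (rule sum_nonneg) (use wpos in force)
lemma M_nonneg: "K \<noteq> {} \<Longrightarrow> 0 \<le> M" using tM by force

lemma fr_neg: assumes "x \<le> -B" shows "fr x < 0"
proof -
  have "w k / (x - t k) \<ge> - w k" if "k \<in> K" for k
  proof -
    have d: "t k - x \<ge> 1" using tM[OF that] assms W_nonneg unfolding B_def by linarith
    have wk: "0 < w k" using wpos that by auto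
    have "w k * 1 \<le> w k * (t k - x)" by (rule mult_left_mono) (use d wk in auto)
    then have "w k / (t k - x) \<le> w k" using d by (simp add: divide_le_eq)
    moreover have "w k / (x - t k) = - (w k / (t k - x))"
      by (metis minus_diff_eq minus_divide_right)
    ultimately show ?thesis by linarith
  qed
  then have "(\<Sum>k\<in>K. w k / (x - t k)) \<ge> (\<Sum>k\<in>K. - w k)" by (intro sum_mono) auto
  then have "(\<Sum>k\<in>K. w k / (x - t k)) \<ge> - W" by (simp add: W_def sum_negf)
  then show ?thesis using assms W_nonneg abs_ge_self[of a] abs_ge_minus_self[of a] M0
    unfolding fr_def B_def by linarith
qed

lemma fr_pos: assumes "x \<ge> B" shows "fr x > 0"
proof -
  have "w k / (x - t k) \<le> w k" if "k \<in> K" for k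
  proof -
    have d: "x - t k \<ge> 1" using tM[OF that] assms W_nonneg unfolding B_def by linarith
    have wk: "0 < w k" using wpos that by auto
    have "w k * 1 \<le> w k * (x - t k)" by (rule mult_left_mono) (use d wk in auto)
    then show ?thesis using d by (simp add: divide_le_eq)
  qed
  then have "(\<Sum>k\<in>K. w k / (x - t k)) \<le> W" unfolding W_def by (intro sum_mono) auto
  then show ?thesis using assms W_nonneg abs_ge_self[of a] abs_ge_minus_self[of a] M0
    unfolding fr_def B_def by linarith
qed

lemma fr_cont: assumes "x \<notin> t ` K" shows "isCont fr x"
proof -
  have "\<forall>k\<in>K. x - t k \<noteq> 0" using assms by force
  then show ?thesis unfolding fr_def by (intro continuous_intros) auto
qed

lemma fr_split: assumes "k \<in> K"
  shows "fr x = (x - a - (\<Sum>j\<in>K-{k}. w j / (x - t j))) + (- (w k / (x - t k)))"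
  using assms finK unfolding fr_def by (simp add: sum.remove)

lemma lim_right: fixes c s :: real assumes "0 < c"
  shows "filterlim (\<lambda>x. c / (x - s)) at_top (at_right s)"
proof (subst filterlim_at_right_to_0)
  have "filterlim (\<lambda>x::real. c * inverse x) at_top (at_right 0)"
    by (rule filterlim_tendsto_pos_mult_at_top[OF tendsto_const assms filterlim_inverse_at_top_right])
  then show "filterlim (\<lambda>x. c / (x + s - s)) at_top (at_right 0)"
    by (simp add: divide_inverse)
qed

lemma lim_left: fixes c s :: real assumes "0 < c"
  shows "filterlim (\<lambda>x. c / (x - s)) at_bot (at_left s)"
proof (subst filterlim_at_left_to_right)
  have "filterlim (\<lambda>x. c / (x - (- s))) at_top (at_right (- s))" by (rule lim_right[OF assms])
  then have "filterlim (\<lambda>x. - (c / (x - (- s)))) at_bot (at_right (- s))"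
    by (simp add: filterlim_uminus_at_top)
  moreover have "(\<lambda>x. - (c / (x - (- s)))) = (\<lambda>x. c / (- x - s))"
  proof (rule ext)
    fix x :: real
    have "- x - s = - (x + s)" by simp
    then show "- (c / (x - (- s))) = c / (- x - s)" by (simp only: divide_minus_right) simp
  qed
  ultimately show "filterlim (\<lambda>x. c / (- x - s)) at_bot (at_right (- s))" by simp
qed

lemma near_pole:
  assumes "k \<in> K"
  shows "eventually (\<lambda>x. fr x < 0) (at_right (t k))" "eventually (\<lambda>x. fr x > 0) (at_left (t k))"
proof -
  define g where "g x = x - a - (\<Sum>j\<in>K-{k}. w j / (x - t j))" for x
  have nz: "\<forall>j\<in>K-{k}. t k - t j \<noteq> 0" using injt assms by (auto simp: inj_on_def)
  have gc: "isCont g (t k)" unfolding g_def using nz by (intro continuous_intros) auto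
  have wk: "0 < w k" using wpos assms by auto
  have inv_r: "filterlim (\<lambda>x. w k / (x - t k)) at_top (at_right (t k))" by (rule lim_right[OF wk])
  have inv_l: "filterlim (\<lambda>x. w k / (x - t k)) at_bot (at_left (t k))" by (rule lim_left[OF wk])
  have "filterlim fr at_bot (at_right (t k))"
  proof -
    have "(g \<longlongrightarrow> g (t k)) (at_right (t k))"
      using gc by (simp add: isCont_def filterlim_at_split)
    moreover have "filterlim (\<lambda>x. - (w k / (x - t k))) at_bot (at_right (t k))"
      using inv_r by (simp add: filterlim_uminus_at_bot)
    ultimately have "filterlim (\<lambda>x. g x + (- (w k / (x - t k)))) at_bot (at_right (t k))"
      by (subst filterlim_tendsto_add_at_bot_iff)
    moreover have "fr = (\<lambda>x. g x + (- (w k / (x - t k))))"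
      using fr_split[OF assms] by (auto simp: g_def fun_eq_iff)
    ultimately show ?thesis by simp
  qed
  then show "eventually (\<lambda>x. fr x < 0) (at_right (t k))"
    by (simp add: filterlim_at_bot_dense)
  have "filterlim fr at_top (at_left (t k))"
  proof -
    have "(g \<longlongrightarrow> g (t k)) (at_left (t k))"
      using gc by (simp add: isCont_def filterlim_at_split)
    moreover have "filterlim (\<lambda>x. - (w k / (x - t k))) at_top (at_left (t k))"
      using inv_l by (simp add: filterlim_uminus_at_top)
    ultimately have "filterlim (\<lambda>x. g x + (- (w k / (x - t k)))) at_top (at_left (t k))"
      by (rule filterlim_tendsto_add_at_top)
    moreover have "fr = (\<lambda>x. g x + (- (w k / (x - t k))))"
      using fr_split[OF assms] by (auto simp: g_def fun_eq_iff)
    ultimately show ?thesis by simp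
  qed
  then show "eventually (\<lambda>x. fr x > 0) (at_left (t k))"
    by (simp add: filterlim_at_top_dense)
qed

lemma root_between:
  assumes "l < r" "\<And>k. k \<in> K \<Longrightarrow> t k \<notin> {l<..<r}"
    "eventually (\<lambda>x. fr x < 0) (at_right l)" "eventually (\<lambda>x. fr x > 0) (at_left r)"
  shows "\<exists>x\<in>{l<..<r}. fr x = 0"
proof -
  define m where "m = (l + r) / 2"
  have lm: "l < m" "m < r" using assms(1) by (auto simp: m_def)
  obtain b where b: "b > l" "\<And>y. y > l \<Longrightarrow> y < b \<Longrightarrow> fr y < 0"
    using assms(3) by (auto simp: eventually_at_right_field)
  obtain c where c: "c < r" "\<And>y. y < r \<Longrightarrow> y > c \<Longrightarrow> fr y > 0"
    using assms(4) by (auto simp: eventually_at_left_field)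
  define p where "p = (l + min b m) / 2"
  define q where "q = (r + max c m) / 2"
  have p: "l < p" "p < m" "fr p < 0" using b lm by (auto simp: p_def intro!: b(2))
  have q: "m < q" "q < r" "fr q > 0" using c lm by (auto simp: q_def intro!: c(2))
  have "continuous_on {p..q} fr"
  proof (intro continuous_at_imp_continuous_on ballI fr_cont)
    fix x assume "x \<in> {p..q}"
    then show "x \<notin> t ` K" using assms(2) p q lm by force
  qed
  then obtain x where "x \<ge> p" "x \<le> q" "fr x = 0"
    using IVT'[of fr p 0 q] p q by auto
  then show ?thesis using p q lm by (intro bexI[of _ x]) auto
qed

end


context core begin

definition "Lo = - B - 1"
definition "Up = B + 1"
definition "S0 = insert Lo (t ` K)"
definition "PP = insert Up S0"
definition "nx s = Min {p \<in> PP. s < p}"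
definition "rho s = (SOME x. x \<in> {s<..<nx s} \<and> fr x = 0)"
definition "Lam = rho ` S0"

lemma B_ge: "M + 1 \<le> B" unfolding B_def using W_nonneg by linarith

lemma t_bounds: "k \<in> K \<Longrightarrow> Lo < t k \<and> t k < Up"
  using tM[of k] B_ge unfolding Lo_def Up_def by (auto simp: abs_le_iff)

lemma Lo_Up: "Lo < Up" unfolding Lo_def Up_def using B_ge M0 by linarith

lemma finPP: "finite PP" unfolding PP_def S0_def using finK by auto

lemma S0_lt_Up: "s \<in> S0 \<Longrightarrow> s < Up" using t_bounds Lo_Up unfolding S0_def by auto

lemma nx_props:
  assumes "s \<in> S0"
  shows "nx s \<in> PP" "s < nx s" "\<And>p. p \<in> PP \<Longrightarrow> s < p \<Longrightarrow> nx s \<le> p"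
proof -
  have ne: "{p \<in> PP. s < p} \<noteq> {}" using S0_lt_Up[OF assms] by (auto simp: PP_def)
  have fin: "finite {p \<in> PP. s < p}" using finPP by auto
  show "nx s \<in> PP" "s < nx s" using Min_in[OF fin ne] unfolding nx_def by auto
  show "\<And>p. p \<in> PP \<Longrightarrow> s < p \<Longrightarrow> nx s \<le> p" unfolding nx_def using fin by (auto intro: Min_le)
qed

lemma no_pole: assumes "s \<in> S0" "k \<in> K" shows "t k \<notin> {s<..<nx s}"
proof
  assume "t k \<in> {s<..<nx s}"
  moreover have "t k \<in> PP" using assms by (auto simp: PP_def S0_def)
  ultimately show False using nx_props(3)[OF assms(1), of "t k"] by auto
qed

lemma ev_right: assumes "s \<in> S0" shows "eventually (\<lambda>x. fr x < 0) (at_right s)"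
proof (cases "s = Lo")
  case True
  have "eventually (\<lambda>x. x < - B) (at_right s)"
    unfolding eventually_at_right_field using True by (intro exI[of _ "-B"]) (auto simp: Lo_def)
  then show ?thesis by eventually_elim (auto intro: fr_neg)
next
  case False
  then obtain k where "k \<in> K" "s = t k" using assms by (auto simp: S0_def)
  then show ?thesis using near_pole(1) by auto
qed

lemma ev_left: assumes "s \<in> S0" shows "eventually (\<lambda>x. fr x > 0) (at_left (nx s))"
proof -
  have nin: "nx s \<in> PP" and lt: "s < nx s" using nx_props[OF assms] by auto
  have "s \<ge> Lo" using assms t_bounds unfolding S0_def by force
  then have "nx s \<noteq> Lo" using lt by auto
  then consider "nx s = Up" | k where "k \<in> K" "nx s = t k" using nin by (auto simp: PP_def S0_def)
  then show ?thesis
  proof cases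
    case 1
    have "eventually (\<lambda>x. x > B) (at_left (nx s))"
      unfolding eventually_at_left_field using 1 by (intro exI[of _ "B"]) (auto simp: Up_def)
    then show ?thesis by eventually_elim (auto intro: fr_pos)
  next
    case 2 then show ?thesis using near_pole(2) by auto
  qed
qed

lemma rho_props: assumes "s \<in> S0" shows "rho s \<in> {s<..<nx s}" "fr (rho s) = 0"
proof -
  have "\<exists>x\<in>{s<..<nx s}. fr x = 0"
    by (rule root_between) (use nx_props[OF assms] no_pole[OF assms] ev_right[OF assms] ev_left[OF assms] in auto)
  then have "rho s \<in> {s<..<nx s} \<and> fr (rho s) = 0"
    unfolding rho_def by (rule someI2_bex) auto
  then show "rho s \<in> {s<..<nx s}" "fr (rho s) = 0" by auto
qed

lemma rho_mono: assumes "s1 \<in> S0" "s2 \<in> S0" "s1 < s2" shows "rho s1 < rho s2"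
proof -
  have "s2 \<in> PP" using assms by (auto simp: PP_def)
  then have "nx s1 \<le> s2" using nx_props(3)[OF assms(1)] assms(3) by auto
  then show ?thesis using rho_props(1)[OF assms(1)] rho_props(1)[OF assms(2)] by auto
qed

lemma inj_rho: "inj_on rho S0"
proof (rule inj_onI)
  fix x y assume "x \<in> S0" "y \<in> S0" "rho x = rho y"
  then show "x = y" using rho_mono[of x y] rho_mono[of y x] by (cases x y rule: linorder_cases) auto
qed

lemma card_S0: "card S0 = Suc (card K)"
proof -
  have "Lo \<notin> t ` K" using t_bounds by force
  then show ?thesis unfolding S0_def using finK card_image[OF injt] by simp
qed

lemma finLam: "finite Lam" unfolding Lam_def S0_def using finK by simp

lemma card_Lam: "card Lam = Suc (card K)"
  unfolding Lam_def using card_image[OF inj_rho] card_S0 by simp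

lemma Lam_root: "l \<in> Lam \<Longrightarrow> fr l = 0" unfolding Lam_def using rho_props(2) by auto

lemma Lam_not_pole: "l \<in> Lam \<Longrightarrow> k \<in> K \<Longrightarrow> l \<noteq> t k"
  unfolding Lam_def using rho_props(1) no_pole by fastforce

lemma Lam_bound: "l \<in> Lam \<Longrightarrow> \<bar>l\<bar> < Up"
proof -
  assume "l \<in> Lam"
  then obtain s where s: "s \<in> S0" "l = rho s" by (auto simp: Lam_def)
  have "s \<ge> Lo" using s t_bounds unfolding S0_def by force
  moreover have "nx s \<le> Up" using nx_props(3)[OF s(1), of Up] S0_lt_Up[OF s(1)] by (auto simp: PP_def)
  ultimately show ?thesis using rho_props(1)[OF s(1)] s Lo_Up unfolding Lo_def Up_def by auto
qed

end


definition lin :: "complex \<Rightarrow> complex poly" where "lin c = [:- c, 1:]"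

lemma poly_lin[simp]: "poly (lin c) z = z - c" by (simp add: lin_def)
lemma lin_nz[simp]: "lin c \<noteq> 0" by (simp add: lin_def)
lemma degree_lin[simp]: "degree (lin c) = 1" by (simp add: lin_def)
lemma lead_lin[simp]: "lead_coeff (lin c) = 1" by (simp add: lin_def)
lemma coeff_lin1[simp]: "coeff (lin c) (Suc 0) = 1" by (simp add: lin_def)

lemma prodlin:
  assumes "finite A"
  shows "degree (\<Prod>x\<in>A. lin (g x)) = card A" "coeff (\<Prod>x\<in>A. lin (g x)) (card A) = 1"
proof -
  show d: "degree (\<Prod>x\<in>A. lin (g x)) = card A"
    by (subst degree_prod_sum_eq) auto
  have "lead_coeff (\<Prod>x\<in>A. lin (g x)) = 1" by (simp add: lead_coeff_prod)
  then show "coeff (\<Prod>x\<in>A. lin (g x)) (card A) = 1" using d by simp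
qed

lemma poly_prodlin: "poly (\<Prod>x\<in>A. lin (g x)) z = (\<Prod>x\<in>A. z - g x)"
  by (simp add: poly_prod)

lemma cancel1: fixes b :: complex assumes "b \<noteq> 0" shows "w * P = w / b * (b * P)"
  using assms by (simp add: field_simps)

lemma cancel2: fixes b :: complex assumes "b \<noteq> 0" "P \<noteq> 0" shows "c * P / (b * P) = - (c / (- b))"
  using assms by (simp add: field_simps)

context core begin

definition "Qp = (\<Prod>k\<in>K. lin (of_real (t k)))"
definition "Rp = (\<Sum>k\<in>K. smult (of_real (w k)) (\<Prod>j\<in>K-{k}. lin (of_real (t j))))"
definition "Pp = lin (of_real a) * Qp - Rp"
definition "Lp = (\<Prod>l\<in>Lam. lin (of_real l))"
definition Fc :: "complex \<Rightarrow> complex" where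
  "Fc z = z - of_real a - (\<Sum>k\<in>K. of_real (w k) / (z - of_real (t k)))"
definition "Qr x = (\<Prod>k\<in>K. x - t k)"

lemma degree_Rp: "degree Rp \<le> card K"
  unfolding Rp_def
proof (rule degree_sum_le)
  fix k assume "k \<in> K"
  have "degree (smult (of_real (w k)) (\<Prod>j\<in>K-{k}. lin (of_real (t j)))) \<le> degree (\<Prod>j\<in>K-{k}. lin (of_real (t j)))"
    by (rule degree_smult_le)
  also have "\<dots> = card (K - {k})" using finK by (simp add: prodlin)
  also have "\<dots> \<le> card K" using finK by (simp add: card_mono)
  finally show "degree (smult (of_real (w k)) (\<Prod>j\<in>K-{k}. lin (of_real (t j)))) \<le> card K" .
qed (use finK in auto)

lemma degree_Qp: "degree Qp = card K" and coeff_Qp: "coeff Qp (card K) = 1"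
  unfolding Qp_def using prodlin[OF finK] by auto

lemma Qp_nz: "Qp \<noteq> 0" unfolding Qp_def using finK by auto

lemma deg_lQ: "degree (lin (of_real a) * Qp) = Suc (card K)"
  by (subst degree_mult_eq) (auto simp: degree_Qp Qp_nz)

lemma coeff_lQ: "coeff (lin (of_real a) * Qp) (Suc (card K)) = 1"
proof -
  have "lead_coeff (lin (of_real a) * Qp) = 1"
    by (simp add: lead_coeff_mult Qp_def lead_coeff_prod)
  then show ?thesis using deg_lQ by simp
qed

lemma degree_Pp: "degree Pp \<le> Suc (card K)"
  unfolding Pp_def using degree_diff_le_max[of "lin (of_real a) * Qp" Rp] deg_lQ degree_Rp by auto

lemma coeff_Pp: "coeff Pp (Suc (card K)) = 1"
  unfolding Pp_def using coeff_lQ degree_Rp by (simp add: coeff_eq_0)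

lemma degree_Lp: "degree Lp = Suc (card K)" and coeff_Lp: "coeff Lp (Suc (card K)) = 1"
  unfolding Lp_def using prodlin[OF finLam] card_Lam by auto

lemma poly_Qp: "poly Qp z = (\<Prod>k\<in>K. z - of_real (t k))"
  unfolding Qp_def by (simp add: poly_prodlin)

lemma poly_Pp:
  assumes "\<And>k. k \<in> K \<Longrightarrow> z \<noteq> of_real (t k)"
  shows "poly Pp z = Fc z * poly Qp z"
proof -
  have tw: "of_real (w k) * (\<Prod>j\<in>K-{k}. z - of_real (t j)) = of_real (w k) / (z - of_real (t k)) * poly Qp z"
    if "k \<in> K" for k
  proof -
    have eq: "poly Qp z = (z - of_real (t k)) * (\<Prod>j\<in>K-{k}. z - of_real (t j))"
      unfolding poly_Qp using that finK by (simp add: prod.remove)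
    have nz: "z - of_real (t k) \<noteq> 0" using assms that by auto
    show ?thesis by (subst eq) (rule cancel1[OF nz])
  qed
  have "poly Rp z = (\<Sum>k\<in>K. of_real (w k) * (\<Prod>j\<in>K-{k}. z - of_real (t j)))"
    unfolding Rp_def by (simp add: poly_sum poly_prodlin)
  also have "\<dots> = (\<Sum>k\<in>K. of_real (w k) / (z - of_real (t k)) * poly Qp z)"
    by (intro sum.cong refl tw)
  finally have "poly Rp z = (\<Sum>k\<in>K. of_real (w k) / (z - of_real (t k))) * poly Qp z"
    by (simp add: sum_distrib_right)
  then show ?thesis unfolding Pp_def Fc_def by (simp add: algebra_simps)
qed

lemma Fc_real: assumes "x \<notin> t ` K" shows "Fc (of_real x) = of_real (fr x)"
  unfolding Fc_def fr_def by simp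

lemma Pp_eq_Lp: "Pp = Lp"
proof (rule poly_eqI_degree_lead_coeff[of _ "Suc (card K)" _ "of_real ` Lam"])
  show "coeff Pp (Suc (card K)) = coeff Lp (Suc (card K))" by (simp add: coeff_Pp coeff_Lp)
  show "Suc (card K) \<le> card (of_real ` Lam :: complex set)"
    by (subst card_image) (auto simp: inj_on_def card_Lam)
  show "degree Pp \<le> Suc (card K)" by (rule degree_Pp)
  show "degree Lp \<le> Suc (card K)" by (simp add: degree_Lp)
  fix z assume "z \<in> (of_real ` Lam :: complex set)"
  then obtain l where l: "l \<in> Lam" "z = of_real l" by auto
  have np: "l \<notin> t ` K" using Lam_not_pole[OF l(1)] by auto
  have "poly Pp z = Fc z * poly Qp z"
    by (rule poly_Pp) (use Lam_not_pole[OF l(1)] l in auto)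
  also have "Fc z = 0" using l Fc_real[OF np] Lam_root[OF l(1)] by simp
  finally have "poly Pp z = 0" by simp
  moreover have "poly Lp z = 0" unfolding Lp_def poly_prodlin using l finLam
    by (auto intro: prod_zero)
  ultimately show "poly Pp z = poly Lp z" by simp
qed

lemma FQ_L:
  assumes "\<And>k. k \<in> K \<Longrightarrow> z \<noteq> of_real (t k)"
  shows "Fc z * poly Qp z = (\<Prod>l\<in>Lam. z - of_real l)"
  using poly_Pp[OF assms] Pp_eq_Lp unfolding Lp_def by (simp add: poly_prodlin)

definition "cl l = Qr l / (\<Prod>l'\<in>Lam-{l}. l - l')"
definition "Cp = (\<Sum>l\<in>Lam. smult (of_real (cl l)) (\<Prod>l'\<in>Lam-{l}. lin (of_real l')))"

lemma prod_others_nz: "l \<in> Lam \<Longrightarrow> (\<Prod>l'\<in>Lam-{l}. l - l') \<noteq> 0"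
  using finLam by auto

lemma card_Lam_rem: "l \<in> Lam \<Longrightarrow> card (Lam - {l}) = card K"
  using card_Lam finLam by simp

lemma degree_Cp: "degree Cp \<le> card K"
  unfolding Cp_def
proof (rule degree_sum_le)
  fix l assume l: "l \<in> Lam"
  have "degree (smult (of_real (cl l)) (\<Prod>l'\<in>Lam-{l}. lin (of_real l'))) \<le> degree (\<Prod>l'\<in>Lam-{l}. lin (of_real l'))"
    by (rule degree_smult_le)
  also have "\<dots> = card K" using finLam card_Lam_rem[OF l] by (simp add: prodlin)
  finally show "degree (smult (of_real (cl l)) (\<Prod>l'\<in>Lam-{l}. lin (of_real l'))) \<le> card K" .
qed (use finLam in auto)

lemma poly_Cp_at: assumes l0: "l0 \<in> Lam" shows "poly Cp (of_real l0) = of_real (Qr l0)"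
proof -
  have "poly Cp (of_real l0) = (\<Sum>l\<in>Lam. of_real (cl l) * (\<Prod>l'\<in>Lam-{l}. of_real l0 - of_real l'))"
    unfolding Cp_def by (simp add: poly_sum poly_prodlin)
  also have "\<dots> = of_real (cl l0) * (\<Prod>l'\<in>Lam-{l0}. of_real l0 - of_real l')
       + (\<Sum>l\<in>Lam-{l0}. of_real (cl l) * (\<Prod>l'\<in>Lam-{l}. of_real l0 - of_real l'))"
    using finLam l0 by (simp add: sum.remove)
  also have "(\<Sum>l\<in>Lam-{l0}. of_real (cl l) * (\<Prod>l'\<in>Lam-{l}. (of_real l0 - of_real l' :: complex))) = 0"
  proof (rule sum.neutral, intro ballI)
    fix l assume "l \<in> Lam - {l0}"
    then have "l0 \<in> Lam - {l}" using l0 by auto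
    then have "(\<Prod>l'\<in>Lam-{l}. (of_real l0 - of_real l' :: complex)) = 0"
      using finLam by (intro prod_zero) auto
    then show "of_real (cl l) * (\<Prod>l'\<in>Lam-{l}. (of_real l0 - of_real l' :: complex)) = 0" by simp
  qed
  also have "(\<Prod>l'\<in>Lam-{l0}. (of_real l0 - of_real l' :: complex)) = of_real (\<Prod>l'\<in>Lam-{l0}. l0 - l')"
    by simp
  finally have "poly Cp (of_real l0) = of_real (cl l0 * (\<Prod>l'\<in>Lam-{l0}. l0 - l'))" by simp
  also have "cl l0 * (\<Prod>l'\<in>Lam-{l0}. l0 - l') = Qr l0"
    using prod_others_nz[OF l0] unfolding cl_def by simp
  finally show ?thesis .
qed

lemma Qp_eq_Cp: "Qp = Cp"
proof (rule poly_eqI_degree_lead_coeff[of _ "Suc (card K)" _ "of_real ` Lam"])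
  show "coeff Qp (Suc (card K)) = coeff Cp (Suc (card K))"
    using degree_Qp degree_Cp by (simp add: coeff_eq_0)
  show "Suc (card K) \<le> card (of_real ` Lam :: complex set)"
    by (subst card_image) (auto simp: inj_on_def card_Lam)
  show "degree Qp \<le> Suc (card K)" by (simp add: degree_Qp)
  show "degree Cp \<le> Suc (card K)" using degree_Cp by simp
  fix z assume "z \<in> (of_real ` Lam :: complex set)"
  then obtain l where l: "l \<in> Lam" "z = of_real l" by auto
  show "poly Qp z = poly Cp z" using l poly_Cp_at[OF l(1)] unfolding poly_Qp Qr_def by simp
qed

lemma sum_cl: "(\<Sum>l\<in>Lam. cl l) = 1"
proof -
  have "coeff Cp (card K) = (\<Sum>l\<in>Lam. of_real (cl l) * coeff (\<Prod>l'\<in>Lam-{l}. lin (of_real l')) (card K))"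
    unfolding Cp_def by (simp add: coeff_sum)
  also have "\<dots> = (\<Sum>l\<in>Lam. of_real (cl l))"
    by (intro sum.cong refl) (metis card_Lam_rem finLam finite_Diff prodlin(2) mult.right_neutral)
  finally have "of_real (\<Sum>l\<in>Lam. cl l) = (1::complex)"
    using Qp_eq_Cp coeff_Qp by simp
  then show ?thesis by (metis of_real_eq_1_iff)
qed

lemma stieltjes_id:
  assumes "Im z \<noteq> 0"
  shows "(\<Sum>l\<in>Lam. of_real (cl l) / (of_real l - z)) = - 1 / Fc z"
proof -
  have np: "\<And>k. k \<in> K \<Longrightarrow> z \<noteq> of_real (t k)" using assms by auto
  have nl: "\<And>l. z - of_real l \<noteq> 0" using assms by auto
  have Qnz: "poly Qp z \<noteq> 0" unfolding poly_Qp using finK np by auto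
  have Lnz: "(\<Prod>l\<in>Lam. z - of_real l) \<noteq> 0" using finLam nl by auto
  have F: "Fc z = (\<Prod>l\<in>Lam. z - of_real l) / poly Qp z" using FQ_L[OF np] Qnz by (simp add: field_simps)
  have "- 1 / Fc z = - poly Cp z / (\<Prod>l\<in>Lam. z - of_real l)"
    using Qp_eq_Cp Qnz Lnz by (simp add: F)
  also have "poly Cp z = (\<Sum>l\<in>Lam. of_real (cl l) * (\<Prod>l'\<in>Lam-{l}. z - of_real l'))"
    unfolding Cp_def by (simp add: poly_sum poly_prodlin)
  also have "- \<dots> / (\<Prod>l\<in>Lam. z - of_real l) = (\<Sum>l\<in>Lam. of_real (cl l) / (of_real l - z))"
  proof -
    have "of_real (cl l) * (\<Prod>l'\<in>Lam-{l}. z - of_real l') / (\<Prod>l\<in>Lam. z - of_real l) =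
          - (of_real (cl l) / (of_real l - z))" if "l \<in> Lam" for l
    proof -
      have eq: "(\<Prod>l\<in>Lam. z - of_real l) = (z - of_real l) * (\<Prod>l'\<in>Lam-{l}. z - of_real l')"
        using that finLam by (simp add: prod.remove)
      have nz: "(\<Prod>l'\<in>Lam-{l}. z - of_real l') \<noteq> 0" using finLam nl by auto
      have nz2: "of_real l - z \<noteq> 0" using nl[of l] by (metis diff_eq_eq eq_iff_diff_eq_0)
      show ?thesis by (subst eq) (simp only: cancel2[OF nl[of l] nz] minus_diff_eq)
    qed
    then show ?thesis
      by (simp add: sum_divide_distrib sum_negf[symmetric])
  qed
  finally show ?thesis by simp
qed

lemma fr_deriv:
  assumes "x \<notin> t ` K"
  shows "(fr has_field_derivative (1 + (\<Sum>k\<in>K. w k / (x - t k)^2))) (at x)"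
proof -
  have d: "((\<lambda>y. w k / (y - t k)) has_field_derivative (- (w k / (x - t k)^2))) (at x)" if "k \<in> K" for k
  proof -
    have "x - t k \<noteq> 0" using assms that by force
    then show ?thesis
      by (auto intro!: derivative_eq_intros simp: power2_eq_square field_simps)
  qed
  have "((\<lambda>y. y - a - (\<Sum>k\<in>K. w k / (y - t k))) has_field_derivative (1 - 0 - (\<Sum>k\<in>K. - (w k / (x - t k)^2)))) (at x)"
    by (intro DERIV_diff DERIV_ident DERIV_const DERIV_sum d)
  then show ?thesis unfolding fr_def by (simp add: sum_negf)
qed

lemma cl_pos: assumes l: "l \<in> Lam" shows "0 < cl l"
proof -
  define d where "d = 1 + (\<Sum>k\<in>K. w k / (l - t k)^2)"
  have np: "l \<notin> t ` K" using Lam_not_pole[OF l] by auto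
  have dpos: "0 < d"
  proof -
    have "0 \<le> (\<Sum>k\<in>K. w k / (l - t k)^2)" using wpos by (intro sum_nonneg) (simp add: less_imp_le)
    then show ?thesis unfolding d_def by linarith
  qed
  have Qrnz: "Qr l \<noteq> 0" unfolding Qr_def using finK np by auto
  have real_id: "(\<Prod>l'\<in>Lam. x - l') = fr x * Qr x" if "x \<notin> t ` K" for x
  proof -
    have "Fc (of_real x) * poly Qp (of_real x) = (\<Prod>l'\<in>Lam. of_real x - of_real l')"
      by (rule FQ_L) (use that in auto)
    then have "of_real (fr x * Qr x) = (of_real (\<Prod>l'\<in>Lam. x - l') :: complex)"
      by (simp add: Fc_real[OF that] poly_Qp Qr_def)
    then show ?thesis by (metis of_real_eq_iff)
  qed
  define h where "h x = (\<Prod>l'\<in>Lam-{l}. x - l')" for x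
  have hc: "(h \<longlongrightarrow> h l) (at l)" unfolding h_def by (intro tendsto_intros)
  have Qc: "(Qr \<longlongrightarrow> Qr l) (at l)" unfolding Qr_def by (intro tendsto_intros)
  have dq: "((\<lambda>x. (fr x - fr l) / (x - l)) \<longlongrightarrow> d) (at l)"
    using fr_deriv[OF np] unfolding d_def has_field_derivative_iff by simp
  have lim2: "((\<lambda>x. (fr x - fr l) / (x - l) * Qr x) \<longlongrightarrow> d * Qr l) (at l)"
    by (rule tendsto_mult[OF dq Qc])
  have ev: "eventually (\<lambda>x. (fr x - fr l) / (x - l) * Qr x = h x) (at l)"
  proof -
    have op: "open (- (t ` K))" using finK by (auto intro: finite_imp_closed)
    show ?thesis unfolding eventually_at_topological
    proof (intro exI[of _ "- (t ` K)"] conjI ballI impI)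
      show "open (- (t ` K))" by (rule op)
      show "l \<in> - (t ` K)" using np by auto
      fix x assume "x \<in> - (t ` K)" "x \<noteq> l"
      then have x: "x \<notin> t ` K" by auto
      show "(fr x - fr l) / (x - l) * Qr x = h x"
      proof -
        have "(\<Prod>l'\<in>Lam. x - l') = (x - l) * h x" unfolding h_def using l finLam by (simp add: prod.remove)
        then have "fr x * Qr x = (x - l) * h x" using real_id[OF x] by simp
        then show ?thesis using \<open>x \<noteq> l\<close> Lam_root[OF l] by (simp add: field_simps)
      qed
    qed
  qed
  have "((\<lambda>x. (fr x - fr l) / (x - l) * Qr x) \<longlongrightarrow> h l) (at l)"
    using hc tendsto_cong[OF ev] by simp
  with lim2 have "h l = d * Qr l" by (intro tendsto_unique[OF at_neq_bot]) auto
  then have "cl l = Qr l / (d * Qr l)" unfolding cl_def h_def by simp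
  then have "cl l = 1 / d" using Qrnz by simp
  then show ?thesis using dpos by simp
qed

end


lemma finite_core:
  fixes K :: "'i set" and t w :: "'i \<Rightarrow> real" and a M :: real
  assumes "finite K" "inj_on t K" "\<And>k. k \<in> K \<Longrightarrow> 0 < w k" "\<And>k. k \<in> K \<Longrightarrow> \<bar>t k\<bar> \<le> M" "0 \<le> M"
  shows "\<exists>L c. finite L \<and> (\<forall>l\<in>L. 0 < c l) \<and> (\<Sum>l\<in>L. c l) = 1 \<and>
     (\<forall>l\<in>L. \<bar>l\<bar> \<le> M + 2 + \<bar>a\<bar> + (\<Sum>k\<in>K. w k)) \<and>
     (\<forall>z. Im z \<noteq> 0 \<longrightarrow> (\<Sum>l\<in>L. of_real (c l) / (of_real l - z)) =
         - 1 / (z - of_real a - (\<Sum>k\<in>K. of_real (w k) / (z - of_real (t k)))))"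
proof -
  interpret core K t w a M using assms by unfold_locales auto
  show ?thesis
  proof (intro exI conjI ballI allI impI)
    show "finite Lam" by (rule finLam)
    show "0 < cl l" if "l \<in> Lam" for l using cl_pos that .
    show "(\<Sum>l\<in>Lam. cl l) = 1" by (rule sum_cl)
    show "\<bar>l\<bar> \<le> M + 2 + \<bar>a\<bar> + (\<Sum>k\<in>K. w k)" if "l \<in> Lam" for l
      using Lam_bound[OF that] unfolding Up_def B_def W_def by simp
    show "(\<Sum>l\<in>Lam. of_real (cl l) / (of_real l - z)) =
         - 1 / (z - of_real a - (\<Sum>k\<in>K. of_real (w k) / (z - of_real (t k))))" if "Im z \<noteq> 0" for z
      using stieltjes_id[OF that] unfolding Fc_def .
  qed
qed

definition nu_of :: "real set \<Rightarrow> (real \<Rightarrow> real) \<Rightarrow> real measure" where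
  "nu_of L c = distr (measure_pmf (embed_pmf (\<lambda>x. if x \<in> L then c x else 0))) borel (\<lambda>x. x)"

lemma nu_of_props:
  assumes "finite L" "\<And>l. l \<in> L \<Longrightarrow> 0 \<le> c l" "(\<Sum>l\<in>L. c l) = 1"
  shows "real_distribution (nu_of L c)"
    "\<And>g :: real \<Rightarrow> 'b::{banach, second_countable_topology}. g \<in> borel_measurable borel \<Longrightarrow>
        integral\<^sup>L (nu_of L c) g = (\<Sum>l\<in>L. c l *\<^sub>R g l)"
proof -
  define f where "f x = (if x \<in> L then c x else 0)" for x
  have f0: "\<And>x. 0 \<le> f x" using assms(2) by (simp add: f_def)
  have f1: "(\<integral>\<^sup>+x. ennreal (f x) \<partial>count_space UNIV) = 1"
  proof -
    have "(\<integral>\<^sup>+x. ennreal (f x) \<partial>count_space UNIV) = (\<Sum>x\<in>L. ennreal (f x))"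
      by (rule nn_integral_count_space') (auto simp: f_def assms(1))
    also have "\<dots> = ennreal (\<Sum>x\<in>L. f x)" using f0 by (simp add: sum_ennreal)
    also have "(\<Sum>x\<in>L. f x) = 1" using assms(3) by (simp add: f_def)
    finally show ?thesis by simp
  qed
  define p where "p = embed_pmf f"
  have pmf_p: "pmf p x = f x" for x unfolding p_def by (rule pmf_embed_pmf[OF f0 f1])
  have nu: "nu_of L c = distr (measure_pmf p) borel (\<lambda>x. x)" unfolding nu_of_def p_def f_def ..
  have mid: "(\<lambda>x. x) \<in> measurable (measure_pmf p) borel" by simp
  show "real_distribution (nu_of L c)"
    unfolding nu real_distribution_def real_distribution_axioms_def
    using measure_pmf.prob_space_distr[OF mid] by simp
  fix g :: "real \<Rightarrow> 'b::{banach, second_countable_topology}"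
  assume g: "g \<in> borel_measurable borel"
  have "integral\<^sup>L (nu_of L c) g = integral\<^sup>L (measure_pmf p) g"
    unfolding nu by (simp add: integral_distr[OF mid g])
  also have "\<dots> = (\<Sum>a\<in>L. pmf p a *\<^sub>R g a)"
  proof (rule integral_measure_pmf[OF assms(1)])
    fix a assume "a \<in> set_pmf p" "g a \<noteq> 0"
    then have "pmf p a \<noteq> 0" by (simp add: set_pmf_iff)
    then show "a \<in> L" by (auto simp: pmf_p f_def split: if_splits)
  qed
  also have "\<dots> = (\<Sum>l\<in>L. c l *\<^sub>R g l)" by (intro sum.cong refl) (simp add: pmf_p f_def)
  finally show "integral\<^sup>L (nu_of L c) g = (\<Sum>l\<in>L. c l *\<^sub>R g l)" .
qed

context rmu begin

interpretation m: prob_space mu by (rule P)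

definition ix :: "nat \<Rightarrow> real \<Rightarrow> nat" where "ix m x = min m (nat \<lfloor>real m * x\<rfloor>)"
definition qd :: "nat \<Rightarrow> real \<Rightarrow> real" where "qd m x = real (ix m x) / real m"
definition pm :: "nat \<Rightarrow> nat \<Rightarrow> real" where "pm m k = measure mu {x. ix m x = k}"

lemma ix_le: "ix m x \<le> m" by (simp add: ix_def)

lemma meas_ix: "(\<lambda>x. real (ix m x)) \<in> borel_measurable borel"
  unfolding ix_def by measurable

lemma meas_qd[measurable]: "qd m \<in> borel_measurable borel"
  unfolding qd_def using meas_ix by measurable

lemma sets_ix: "{x. ix m x = k} \<in> sets borel"
proof -
  have "{x. ix m x = k} = {x\<in>space borel. real (ix m x) = real k}" by auto
  also have "\<dots> \<in> sets borel" using meas_ix by measurable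
  finally show ?thesis .
qed

lemma qd_01: "0 \<le> qd m x" "qd m x \<le> 1"
  using ix_le[of m x] by (auto simp: qd_def divide_le_eq)

lemma pm_nonneg: "0 \<le> pm m k" by (simp add: pm_def)

lemma int_qd:
  fixes g :: "real \<Rightarrow> complex"
  shows "(\<integral>x. g (qd m x) \<partial>mu) = (\<Sum>k\<in>{0..m}. of_real (pm m k) * g (real k / real m))"
proof -
  have pw: "g (qd m x) = (\<Sum>k\<in>{0..m}. indicator {x. ix m x = k} x *\<^sub>R g (real k / real m))" for x
  proof -
    have "(\<Sum>k\<in>{0..m}. indicator {x. ix m x = k} x *\<^sub>R g (real k / real m)) =
          (\<Sum>k\<in>{0..m}. if ix m x = k then g (real k / real m) else 0)"
      by (intro sum.cong refl) (auto simp: indicator_def)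
    also have "\<dots> = g (real (ix m x) / real m)"
      using ix_le[of m x] by (simp add: sum.delta')
    finally show ?thesis by (simp add: qd_def)
  qed
  have si: "{x. ix m x = k} \<in> sets mu" for k using sets_ix S by simp
  have "(\<integral>x. g (qd m x) \<partial>mu) = (\<integral>x. (\<Sum>k\<in>{0..m}. indicator {x. ix m x = k} x *\<^sub>R g (real k / real m)) \<partial>mu)"
    by (simp add: pw)
  also have "\<dots> = (\<Sum>k\<in>{0..m}. (\<integral>x. indicator {x. ix m x = k} x *\<^sub>R g (real k / real m) \<partial>mu))"
    by (rule Bochner_Integration.integral_sum[where I="{0..m}" and M=mu and f="\<lambda>k x. indicator {x. ix m x = k} x *\<^sub>R g (real k / real m)"])
       (auto intro!: integrable_scaleR_left simp: si m.emeasure_eq_measure)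
  also have "\<dots> = (\<Sum>k\<in>{0..m}. pm m k *\<^sub>R g (real k / real m))"
    by (intro sum.cong refl) (simp add: pm_def m.emeasure_eq_measure si)
  finally show ?thesis by (simp add: scaleR_conv_of_real)
qed

lemma sum_pm: "(\<Sum>k\<in>{0..m}. pm m k) = 1"
proof -
  have "(\<Sum>k\<in>{0..m}. of_real (pm m k) * (1::complex)) = (\<integral>x. (1::complex) \<partial>mu)"
    using int_qd[of "\<lambda>_. 1" m] by simp
  also have "\<dots> = 1" by (simp add: m.prob_space)
  finally have "(\<Sum>k\<in>{0..m}. of_real (pm m k) * (1::complex)) = 1" .
  then have "of_real (\<Sum>k\<in>{0..m}. pm m k) = (1::complex)" by simp
  then show ?thesis by (metis of_real_eq_1_iff)
qed

end


context rmu begin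

interpretation m: prob_space mu by (rule P)

definition hz :: "complex \<Rightarrow> real \<Rightarrow> complex" where
  "hz z y = z * of_real y / (1 - z - of_real y)"

definition Dz :: "real \<Rightarrow> complex \<Rightarrow> complex" where
  "Dz \<beta> z = - z - exp (of_real \<beta>) * (\<integral>x. hz z x \<partial>mu)"

definition Dm :: "real \<Rightarrow> nat \<Rightarrow> complex \<Rightarrow> complex" where
  "Dm \<beta> m z = - z - exp (of_real \<beta>) * (\<integral>x. hz z (qd m x) \<partial>mu)"

lemma denom_nz: assumes "Im z \<noteq> 0" shows "1 - z - complex_of_real y \<noteq> 0"
proof
  assume "1 - z - complex_of_real y = 0"
  then have "Im (1 - z - complex_of_real y) = 0" by simp
  then show False using assms by simp
qed

lemma hz_split:
  assumes "Im z \<noteq> 0"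
  shows "hz z y = - of_real y - of_real (y * (1 - y)) / (z - of_real (1 - y))"
proof -
  have n1: "1 - z - complex_of_real y \<noteq> 0" using denom_nz[OF assms] .
  have n2: "z - complex_of_real (1 - y) \<noteq> 0" using assms by (auto simp: complex_eq_iff)
  have e: "z - complex_of_real (1 - y) = - (1 - z - complex_of_real y)" by simp
  show ?thesis unfolding hz_def using n1 n2 by (subst e) (simp add: field_simps)
qed

lemma hz_bound:
  assumes "Im z > 0" "0 \<le> y" "y \<le> 1"
  shows "norm (hz z y) \<le> cmod z / Im z"
proof -
  have "Im z \<le> cmod (1 - z - complex_of_real y)"
    using abs_Im_le_cmod[of "1 - z - complex_of_real y"] assms by simp
  moreover have "cmod (z * complex_of_real y) \<le> cmod z" using assms by (simp add: norm_mult mult_left_le)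
  ultimately show ?thesis unfolding hz_def norm_divide
    using assms by (intro frac_le) auto
qed

lemma hz_cont: "Im z \<noteq> 0 \<Longrightarrow> isCont (hz z) y"
  unfolding hz_def using denom_nz by (intro continuous_intros) auto

lemma hz_meas[measurable]: "hz z \<in> borel_measurable borel"
  unfolding hz_def by measurable

lemma hz_Im: assumes "Im z > 0" "0 \<le> y" "y \<le> 1" shows "0 \<le> Im (hz z y)"
proof -
  have "Im (hz z y) = (y * Im z * (1 - Re z - y) + y * Re z * Im z) / ((1 - Re z - y)\<^sup>2 + (Im z)\<^sup>2)"
    unfolding hz_def by (simp add: Im_divide)
  also have "y * Im z * (1 - Re z - y) + y * Re z * Im z = y * (1 - y) * Im z" by (simp add: algebra_simps)
  finally show ?thesis using assms by simp
qed

lemma int_hz: "Im z > 0 \<Longrightarrow> integrable mu (hz z)"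
  by (rule integrable_bdd[where B="cmod z / Im z"]) (auto intro: hz_bound)

lemma int_hz_qd: "Im z > 0 \<Longrightarrow> integrable mu (\<lambda>x. hz z (qd m x))"
proof -
  assume z: "Im z > 0"
  have "integrable mu (\<lambda>_. cmod z / Im z)" by simp
  moreover have "(\<lambda>x. hz z (qd m x)) \<in> borel_measurable mu" by (simp add: measurable_cong_sets[OF S refl])
  moreover have "AE x in mu. norm (hz z (qd m x)) \<le> norm (cmod z / Im z)"
    using hz_bound[OF z qd_01] z by (auto intro!: AE_I2 simp: abs_of_nonneg)
  ultimately show ?thesis by (rule Bochner_Integration.integrable_bound)
qed

lemma Dz_Im: assumes "Im z > 0" shows "Im (Dz \<beta> z) < 0"
proof -
  have "0 \<le> (\<integral>x. Im (hz z x) \<partial>mu)"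
    by (rule integral_nonneg_AE) (use AE01 in \<open>eventually_elim, auto intro: hz_Im[OF assms]\<close>)
  also have "(\<integral>x. Im (hz z x) \<partial>mu) = Im (\<integral>x. hz z x \<partial>mu)"
    by (rule integral_Im[OF int_hz[OF assms]])
  finally have "0 \<le> Im (\<integral>x. hz z x \<partial>mu)" .
  moreover have "exp (complex_of_real \<beta>) = of_real (exp \<beta>)" by (simp add: exp_of_real)
  ultimately show ?thesis unfolding Dz_def using assms
    by (simp add: mult_nonneg_nonneg) (smt (verit) exp_gt_zero mult_nonneg_nonneg)
qed

lemma Dz_nz: "Im z > 0 \<Longrightarrow> Dz \<beta> z \<noteq> 0" using Dz_Im[of z \<beta>] by auto

lemma qd_lim: assumes "0 \<le> x" "x \<le> 1" shows "(\<lambda>m. qd m x) \<longlonglongrightarrow> x"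
proof (rule tendsto_sandwich[where f="\<lambda>m. x - 1 / real m" and h="\<lambda>m. x"])
  show "eventually (\<lambda>m. x - 1 / real m \<le> qd m x) sequentially"
    unfolding eventually_sequentially
  proof (intro exI allI impI)
    fix m :: nat assume "1 \<le> m"
    have fl: "0 \<le> \<lfloor>real m * x\<rfloor>" using assms by simp
    have "real m * x \<le> real m" using assms by (simp add: mult_left_le)
    then have "\<lfloor>real m * x\<rfloor> \<le> \<lfloor>real m\<rfloor>" by (rule floor_mono)
    then have fu: "\<lfloor>real m * x\<rfloor> \<le> m" by simp
    have "nat \<lfloor>real m * x\<rfloor> \<le> m" using fu by (simp add: nat_le_iff)
    then have "ix m x = nat \<lfloor>real m * x\<rfloor>" unfolding ix_def by (simp add: min_absorb2)
    then have ix: "real (ix m x) = real_of_int \<lfloor>real m * x\<rfloor>" using fl by simp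
    have "real m * x < real_of_int \<lfloor>real m * x\<rfloor> + 1" by (rule real_of_int_floor_add_one_gt)
    then have "real m * x - 1 \<le> real_of_int \<lfloor>real m * x\<rfloor>" by simp
    then have "(real m * x - 1) / real m \<le> real_of_int \<lfloor>real m * x\<rfloor> / real m"
      using \<open>1 \<le> m\<close> by (intro divide_right_mono) auto
    moreover have "(real m * x - 1) / real m = x - 1 / real m" using \<open>1 \<le> m\<close> by (simp add: field_simps)
    ultimately have "x - 1 / real m \<le> real_of_int \<lfloor>real m * x\<rfloor> / real m" by simp
    then show "x - 1 / real m \<le> qd m x" by (simp add: qd_def ix)
  qed
  show "eventually (\<lambda>m. qd m x \<le> x) sequentially"
    unfolding eventually_sequentially
  proof (intro exI allI impI)
    fix m :: nat assume "1 \<le> m"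
    have fl: "0 \<le> \<lfloor>real m * x\<rfloor>" using assms by simp
    have "real m * x \<le> real m" using assms by (simp add: mult_left_le)
    then have "\<lfloor>real m * x\<rfloor> \<le> \<lfloor>real m\<rfloor>" by (rule floor_mono)
    then have fu: "\<lfloor>real m * x\<rfloor> \<le> m" by simp
    have "nat \<lfloor>real m * x\<rfloor> \<le> m" using fu by (simp add: nat_le_iff)
    then have "ix m x = nat \<lfloor>real m * x\<rfloor>" unfolding ix_def by (simp add: min_absorb2)
    then have ix: "real (ix m x) = real_of_int \<lfloor>real m * x\<rfloor>" using fl by simp
    have "real_of_int \<lfloor>real m * x\<rfloor> \<le> real m * x" by simp
    then show "qd m x \<le> x" using \<open>1 \<le> m\<close> by (simp add: qd_def ix field_simps)
  qed
  show "(\<lambda>m. x - 1 / real m) \<longlonglongrightarrow> x"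
    using tendsto_diff[OF tendsto_const lim_1_over_n, of x] by simp
qed simp

lemma Dm_lim:
  assumes "Im z > 0" "filterlim s sequentially sequentially"
  shows "(\<lambda>n. Dm \<beta> (s n) z) \<longlonglongrightarrow> Dz \<beta> z"
proof -
  have "(\<lambda>n. \<integral>x. hz z (qd (s n) x) \<partial>mu) \<longlonglongrightarrow> (\<integral>x. hz z x \<partial>mu)"
  proof (rule integral_dominated_convergence[where w="\<lambda>_. cmod z / Im z"])
    show "hz z \<in> borel_measurable mu" by (simp add: measurable_cong_sets[OF S refl])
    show "(\<lambda>x. hz z (qd (s n) x)) \<in> borel_measurable mu" for n by (simp add: measurable_cong_sets[OF S refl])
    show "integrable mu (\<lambda>_. cmod z / Im z)" by simp
    show "AE x in mu. (\<lambda>n. hz z (qd (s n) x)) \<longlonglongrightarrow> hz z x"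
      using AE01
    proof eventually_elim
      case (elim x)
      have "(\<lambda>n. qd (s n) x) \<longlonglongrightarrow> x"
        using filterlim_compose[OF qd_lim assms(2)] elim by auto
      then show ?case using hz_cont assms by (intro isCont_tendsto_compose[of x "hz z"]) auto
    qed
    show "AE x in mu. norm (hz z (qd (s n) x)) \<le> cmod z / Im z" for n
      using hz_bound[OF assms(1) qd_01] by (auto intro!: AE_I2)
  qed
  then show ?thesis unfolding Dm_def Dz_def by (intro tendsto_intros)
qed

end


context rmu begin

interpretation m: prob_space mu by (rule P)

definition xk :: "nat \<Rightarrow> nat \<Rightarrow> real" where "xk m k = real k / real m"
definition wK :: "real \<Rightarrow> nat \<Rightarrow> nat \<Rightarrow> real" where
  "wK \<beta> m k = exp \<beta> * pm m k * xk m k * (1 - xk m k)"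
definition Km :: "real \<Rightarrow> nat \<Rightarrow> nat set" where "Km \<beta> m = {k\<in>{0..m}. 0 < wK \<beta> m k}"
definition am :: "real \<Rightarrow> nat \<Rightarrow> real" where "am \<beta> m = exp \<beta> * (\<Sum>k\<in>{0..m}. pm m k * xk m k)"
definition Rb :: "real \<Rightarrow> real" where "Rb \<beta> = 3 + 2 * exp \<beta>"

lemma xk_01: "1 \<le> m \<Longrightarrow> k \<le> m \<Longrightarrow> 0 \<le> xk m k \<and> xk m k \<le> 1"
  by (auto simp: xk_def divide_le_eq)

lemma wK_nonneg: "1 \<le> m \<Longrightarrow> k \<le> m \<Longrightarrow> 0 \<le> wK \<beta> m k"
  using xk_01[of m k] pm_nonneg[of m k] unfolding wK_def by (auto intro!: mult_nonneg_nonneg)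

lemma wK_le: "1 \<le> m \<Longrightarrow> k \<le> m \<Longrightarrow> wK \<beta> m k \<le> exp \<beta> * pm m k"
proof -
  assume a: "1 \<le> m" "k \<le> m"
  have "xk m k * (1 - xk m k) \<le> 1" using xk_01[OF a] by (simp add: mult_le_one)
  then have "exp \<beta> * pm m k * (xk m k * (1 - xk m k)) \<le> exp \<beta> * pm m k * 1"
    using pm_nonneg[of m k] by (intro mult_left_mono) auto
  then show ?thesis unfolding wK_def by (simp add: mult.assoc)
qed

lemma am_bounds: "1 \<le> m \<Longrightarrow> 0 \<le> am \<beta> m \<and> am \<beta> m \<le> exp \<beta>"
proof -
  assume m: "1 \<le> m"
  have "(\<Sum>k\<in>{0..m}. pm m k * xk m k) \<le> (\<Sum>k\<in>{0..m}. pm m k)"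
    using xk_01[OF m] pm_nonneg by (intro sum_mono) (auto simp: mult_left_le)
  moreover have "0 \<le> (\<Sum>k\<in>{0..m}. pm m k * xk m k)"
    using xk_01[OF m] pm_nonneg by (intro sum_nonneg) auto
  ultimately show ?thesis unfolding am_def sum_pm by (auto simp: mult_left_le)
qed

lemma sum_wK: "1 \<le> m \<Longrightarrow> (\<Sum>k\<in>Km \<beta> m. wK \<beta> m k) \<le> exp \<beta>"
proof -
  assume m: "1 \<le> m"
  have "(\<Sum>k\<in>Km \<beta> m. wK \<beta> m k) \<le> (\<Sum>k\<in>{0..m}. wK \<beta> m k)"
    using wK_nonneg[OF m] by (intro sum_mono2) (auto simp: Km_def)
  also have "\<dots> \<le> (\<Sum>k\<in>{0..m}. exp \<beta> * pm m k)" using wK_le[OF m] by (intro sum_mono) auto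
  also have "\<dots> = exp \<beta>" by (simp add: sum_distrib_left[symmetric] sum_pm)
  finally show ?thesis .
qed

lemma Dm_eq:
  assumes m: "1 \<le> m" and z: "Im z \<noteq> 0"
  shows "Dm \<beta> m z = - (z - of_real (am \<beta> m) - (\<Sum>k\<in>Km \<beta> m. of_real (wK \<beta> m k) / (z - of_real (1 - xk m k))))"
proof -
  have e: "exp (complex_of_real \<beta>) = of_real (exp \<beta>)" by (simp add: exp_of_real)
  have "(\<integral>x. hz z (qd m x) \<partial>mu) = (\<Sum>k\<in>{0..m}. of_real (pm m k) * hz z (xk m k))"
    unfolding int_qd xk_def ..
  also have "\<dots> = (\<Sum>k\<in>{0..m}. - of_real (pm m k * xk m k)
        - of_real (pm m k * xk m k * (1 - xk m k)) / (z - of_real (1 - xk m k)))"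
    by (intro sum.cong refl) (simp add: hz_split[OF z] algebra_simps)
  also have "\<dots> = - of_real (\<Sum>k\<in>{0..m}. pm m k * xk m k)
        - (\<Sum>k\<in>{0..m}. of_real (pm m k * xk m k * (1 - xk m k)) / (z - of_real (1 - xk m k)))"
    by (simp add: sum_subtractf sum_negf)
  also have "(\<Sum>k\<in>{0..m}. of_real (pm m k * xk m k * (1 - xk m k)) / (z - of_real (1 - xk m k))) =
       (\<Sum>k\<in>Km \<beta> m. of_real (pm m k * xk m k * (1 - xk m k)) / (z - of_real (1 - xk m k)))"
  proof (rule sum.mono_neutral_right)
    show "\<forall>i\<in>{0..m} - Km \<beta> m. of_real (pm m i * xk m i * (1 - xk m i)) / (z - of_real (1 - xk m i)) = 0"
    proof
      fix i assume i: "i \<in> {0..m} - Km \<beta> m"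
      have "i \<le> m" using i by auto
      then have "0 \<le> wK \<beta> m i" by (rule wK_nonneg[OF m])
      then have "wK \<beta> m i = 0" using i by (auto simp: Km_def)
      then have "pm m i * xk m i * (1 - xk m i) = 0" by (simp add: wK_def)
      then show "of_real (pm m i * xk m i * (1 - xk m i)) / (z - of_real (1 - xk m i)) = 0" by simp
    qed
  qed (auto simp: Km_def)
  finally have I: "(\<integral>x. hz z (qd m x) \<partial>mu) = - of_real (\<Sum>k\<in>{0..m}. pm m k * xk m k)
        - (\<Sum>k\<in>Km \<beta> m. of_real (pm m k * xk m k * (1 - xk m k)) / (z - of_real (1 - xk m k)))" .
  have "exp (complex_of_real \<beta>) * (\<integral>x. hz z (qd m x) \<partial>mu) =
        - of_real (am \<beta> m) - (\<Sum>k\<in>Km \<beta> m. of_real (wK \<beta> m k) / (z - of_real (1 - xk m k)))"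
    unfolding I e am_def wK_def by (simp add: sum_distrib_left algebra_simps)
  then show ?thesis unfolding Dm_def by simp
qed

lemma disc:
  assumes m: "1 \<le> m"
  shows "\<exists>L c. finite L \<and> (\<forall>l\<in>L. 0 < c l) \<and> (\<Sum>l\<in>L. c l) = 1 \<and> (\<forall>l\<in>L. \<bar>l\<bar> \<le> Rb \<beta>) \<and>
     (\<forall>z. Im z > 0 \<longrightarrow> (\<Sum>l\<in>L. of_real (c l) / (of_real l - z)) = 1 / Dm \<beta> m z)"
proof -
  have inj: "inj_on (\<lambda>k. 1 - xk m k) (Km \<beta> m)" using m by (auto simp: inj_on_def xk_def)
  have fin: "finite (Km \<beta> m)" by (simp add: Km_def)
  have tb: "\<bar>1 - xk m k\<bar> \<le> 1" if "k \<in> Km \<beta> m" for k using xk_01[OF m, of k] that by (auto simp: Km_def)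
  obtain L c where Lc: "finite L" "\<forall>l\<in>L. 0 < c l" "(\<Sum>l\<in>L. c l) = 1"
     "\<forall>l\<in>L. \<bar>l\<bar> \<le> 1 + 2 + \<bar>am \<beta> m\<bar> + (\<Sum>k\<in>Km \<beta> m. wK \<beta> m k)"
     "\<forall>z. Im z \<noteq> 0 \<longrightarrow> (\<Sum>l\<in>L. of_real (c l) / (of_real l - z)) =
         - 1 / (z - of_real (am \<beta> m) - (\<Sum>k\<in>Km \<beta> m. of_real (wK \<beta> m k) / (z - of_real (1 - xk m k))))"
    using finite_core[OF fin inj, of "wK \<beta> m" 1 "am \<beta> m"] tb by (auto simp: Km_def)
  show ?thesis
  proof (intro exI conjI ballI allI impI)
    show "finite L" "(\<Sum>l\<in>L. c l) = 1" using Lc by auto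
    show "0 < c l" if "l \<in> L" for l using Lc that by auto
    show "\<bar>l\<bar> \<le> Rb \<beta>" if "l \<in> L" for l
      using Lc(4) that am_bounds[OF m, of \<beta>] sum_wK[OF m, of \<beta>] unfolding Rb_def by fastforce
    fix z :: complex assume z: "Im z > 0"
    then have z': "Im z \<noteq> 0" by simp
    define SS where "SS = (\<Sum>k\<in>Km \<beta> m. of_real (wK \<beta> m k) / (z - of_real (1 - xk m k)))"
    have e1: "(\<Sum>l\<in>L. of_real (c l) / (of_real l - z)) = - 1 / (z - of_real (am \<beta> m) - SS)"
      using Lc(5) z' unfolding SS_def by blast
    have e2: "z - of_real (am \<beta> m) - SS = - Dm \<beta> m z"
      unfolding SS_def by (simp only: Dm_eq[OF m z'] minus_minus)
    show "(\<Sum>l\<in>L. of_real (c l) / (of_real l - z)) = 1 / Dm \<beta> m z"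
      unfolding e1 e2 by simp
  qed
qed

end


lemma gz_bound: assumes "Im z > 0" shows "norm (1 / (complex_of_real x - z)) \<le> 1 / Im z"
proof -
  have "Im z \<le> cmod (complex_of_real x - z)"
    using abs_Im_le_cmod[of "complex_of_real x - z"] assms by simp
  then show ?thesis using assms by (simp add: norm_divide frac_le)
qed

lemma gz_cont: assumes "Im z > 0" shows "isCont (\<lambda>x. 1 / (complex_of_real x - z)) x"
proof -
  have "complex_of_real x - z \<noteq> 0" using assms by (auto simp: complex_eq_iff)
  then show ?thesis by (intro continuous_intros) auto
qed

context rmu begin

interpretation m: prob_space mu by (rule P)

lemma exists_nu:
  "\<exists>\<nu>. real_distribution \<nu> \<and> (AE x in \<nu>. \<bar>x\<bar> \<le> Rb \<beta>) \<and>
      (\<forall>z. Im z > 0 \<longrightarrow> stieltjes \<nu> z = 1 / Dz \<beta> z)"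
proof -
  define P where "P n p \<longleftrightarrow> finite (fst p) \<and> (\<forall>l\<in>fst p. 0 < snd p l) \<and> (\<Sum>l\<in>fst p. snd p l) = 1 \<and>
     (\<forall>l\<in>fst p. \<bar>l\<bar> \<le> Rb \<beta>) \<and>
     (\<forall>z. Im z > 0 \<longrightarrow> (\<Sum>l\<in>fst p. of_real (snd p l) / (of_real l - z)) = 1 / Dm \<beta> (Suc n) z)"
    for n :: nat and p :: "real set \<times> (real \<Rightarrow> real)"
  have "\<forall>n. \<exists>p. P n p"
  proof
    fix n
    obtain L c where "finite L \<and> (\<forall>l\<in>L. 0 < c l) \<and> (\<Sum>l\<in>L. c l) = 1 \<and> (\<forall>l\<in>L. \<bar>l\<bar> \<le> Rb \<beta>) \<and>
     (\<forall>z. Im z > 0 \<longrightarrow> (\<Sum>l\<in>L. of_real (c l) / (of_real l - z)) = 1 / Dm \<beta> (Suc n) z)"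
      using disc[of "Suc n" \<beta>] by auto
    then show "\<exists>p. P n p" unfolding P_def by (intro exI[of _ "(L, c)"]) simp
  qed
  then obtain f where f: "\<And>n. P n (f n)" using choice by blast
  define L where "L n = fst (f n)" for n
  define c where "c n = snd (f n)" for n
  have Lf: "finite (L n)" and cp: "\<And>l. l \<in> L n \<Longrightarrow> 0 < c n l" and cs: "(\<Sum>l\<in>L n. c n l) = 1"
    and Lb: "\<And>l. l \<in> L n \<Longrightarrow> \<bar>l\<bar> \<le> Rb \<beta>"
    and st: "\<And>z. Im z > 0 \<Longrightarrow> (\<Sum>l\<in>L n. of_real (c n l) / (of_real l - z)) = 1 / Dm \<beta> (Suc n) z" for n
    using f[of n] unfolding P_def L_def c_def by auto
  define \<nu>s where "\<nu>s n = nu_of (L n) (c n)" for n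
  have rd: "real_distribution (\<nu>s n)" for n
    unfolding \<nu>s_def by (rule nu_of_props(1)[OF Lf]) (use cp cs in \<open>auto intro: less_imp_le\<close>)
  have int: "integral\<^sup>L (\<nu>s n) g = (\<Sum>l\<in>L n. c n l *\<^sub>R g l)"
    if "g \<in> borel_measurable borel" for n and g :: "real \<Rightarrow> 'b::{banach, second_countable_topology}"
    unfolding \<nu>s_def by (rule nu_of_props(2)[OF Lf _ cs that]) (use cp in \<open>auto intro: less_imp_le\<close>)
  have sp: "space (\<nu>s n) = UNIV" for n
    using rd[of n] by (simp add: real_distribution_def real_distribution_axioms_def sets_eq_imp_space_eq)
  have tight: "tight \<nu>s"
    unfolding tight_def
  proof (intro conjI allI impI)
    show "real_distribution (\<nu>s n)" for n by (rule rd)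
    fix \<epsilon> :: real assume "\<epsilon> > 0"
    show "\<exists>a b. a < b \<and> (\<forall>n. 1 - \<epsilon> < measure (\<nu>s n) {a<..b})"
    proof (intro exI conjI allI)
      show "- Rb \<beta> - 1 < Rb \<beta> + 1" unfolding Rb_def using exp_gt_zero[of \<beta>] by linarith
      fix n
      have "measure (\<nu>s n) {- Rb \<beta> - 1<..Rb \<beta> + 1} = integral\<^sup>L (\<nu>s n) (indicator {- Rb \<beta> - 1<..Rb \<beta> + 1})"
        by (simp add: sp)
      also have "\<dots> = (\<Sum>l\<in>L n. c n l *\<^sub>R (indicator {- Rb \<beta> - 1<..Rb \<beta> + 1} l :: real))"
        by (rule int) simp
      also have "\<dots> = (\<Sum>l\<in>L n. c n l)"
        by (intro sum.cong refl) (use Lb in \<open>force simp: indicator_def\<close>)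
      finally show "1 - \<epsilon> < measure (\<nu>s n) {- Rb \<beta> - 1<..Rb \<beta> + 1}" using cs \<open>\<epsilon> > 0\<close> by simp
    qed
  qed
  obtain r \<nu> where r: "strict_mono r" and rd\<nu>: "real_distribution \<nu>" and wc: "weak_conv_m (\<nu>s \<circ> id \<circ> r) \<nu>"
    using tight_imp_convergent_subsubsequence[OF tight strict_mono_id] by blast
  interpret \<nu>: real_distribution \<nu> by (rule rd\<nu>)
  have conv: "(\<lambda>n. integral\<^sup>L (\<nu>s (r n)) g) \<longlonglongrightarrow> integral\<^sup>L \<nu> g"
    if "\<And>x. isCont g x" "\<And>x. norm (g x) \<le> B" for g :: "real \<Rightarrow> 'b::{banach, second_countable_topology}" and B
    using weak_conv_imp_integral_bdd_continuous_conv[of "\<nu>s \<circ> id \<circ> r" \<nu> g B] that rd rd\<nu> wc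
    by (simp add: o_def)
  define \<phi> where "\<phi> x = min 1 (max 0 (\<bar>x\<bar> - Rb \<beta>))" for x
  have \<phi>c: "isCont \<phi> x" for x unfolding \<phi>_def by (intro continuous_intros)
  have \<phi>b: "norm (\<phi> x) \<le> 1" for x unfolding \<phi>_def by auto
  have \<phi>m: "\<phi> \<in> borel_measurable borel" unfolding \<phi>_def by measurable
  have L1: "(\<lambda>n. integral\<^sup>L (\<nu>s (r n)) \<phi>) \<longlonglongrightarrow> integral\<^sup>L \<nu> \<phi>" using conv[OF \<phi>c \<phi>b] .
  have L0: "integral\<^sup>L (\<nu>s (r n)) \<phi> = 0" for n
  proof -
    have "integral\<^sup>L (\<nu>s (r n)) \<phi> = (\<Sum>l\<in>L (r n). c (r n) l *\<^sub>R \<phi> l)" by (rule int[OF \<phi>m])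
    also have "\<dots> = 0" by (intro sum.neutral ballI) (use Lb in \<open>force simp: \<phi>_def\<close>)
    finally show ?thesis .
  qed
  have "(\<lambda>n. 0::real) \<longlonglongrightarrow> integral\<^sup>L \<nu> \<phi>" using L1 by (simp add: L0)
  then have "integral\<^sup>L \<nu> \<phi> = 0" using LIMSEQ_unique[OF tendsto_const] by metis
  moreover have "integrable \<nu> \<phi>"
    using \<phi>b \<phi>m by (intro \<nu>.integrable_const_bound[where B=1]) (auto simp: measurable_cong_sets[OF \<nu>.events_eq_borel refl])
  ultimately have "AE x in \<nu>. \<phi> x = 0"
    by (subst (asm) integral_nonneg_eq_0_iff_AE) (auto simp: \<phi>_def)
  then have supp: "AE x in \<nu>. \<bar>x\<bar> \<le> Rb \<beta>"
    by eventually_elim (auto simp: \<phi>_def split: if_splits)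
  have stl: "stieltjes \<nu> z = 1 / Dz \<beta> z" if z: "Im z > 0" for z
  proof -
    have A: "(\<lambda>n. integral\<^sup>L (\<nu>s (r n)) (\<lambda>x. 1 / (complex_of_real x - z))) \<longlonglongrightarrow> stieltjes \<nu> z"
      unfolding stieltjes_def by (rule conv[OF gz_cont[OF z] gz_bound[OF z]])
    have B: "integral\<^sup>L (\<nu>s (r n)) (\<lambda>x. 1 / (complex_of_real x - z)) = 1 / Dm \<beta> (Suc (r n)) z" for n
    proof -
      have "integral\<^sup>L (\<nu>s (r n)) (\<lambda>x. 1 / (complex_of_real x - z)) =
            (\<Sum>l\<in>L (r n). c (r n) l *\<^sub>R (1 / (complex_of_real l - z)))" by (rule int) simp
      also have "\<dots> = (\<Sum>l\<in>L (r n). of_real (c (r n) l) / (of_real l - z))"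
        by (simp add: scaleR_conv_of_real)
      also have "\<dots> = 1 / Dm \<beta> (Suc (r n)) z" by (rule st[OF z])
      finally show ?thesis .
    qed
    have C: "(\<lambda>n. 1 / Dm \<beta> (Suc (r n)) z) \<longlonglongrightarrow> 1 / Dz \<beta> z"
    proof (intro tendsto_divide tendsto_const Dm_lim[OF z] Dz_nz[OF z])
      show "filterlim (\<lambda>n. Suc (r n)) sequentially sequentially"
        using filterlim_compose[OF filterlim_Suc filterlim_subseq[OF r]] by (simp add: o_def)
    qed
    from A have "(\<lambda>n. 1 / Dm \<beta> (Suc (r n)) z) \<longlonglongrightarrow> stieltjes \<nu> z" by (simp add: B)
    from LIMSEQ_unique[OF this C] show ?thesis .
  qed
  show ?thesis using rd\<nu> supp stl by blast
qed

end


lemma summable_geo_bound: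
  fixes f :: "nat \<Rightarrow> 'a::banach"
  assumes "\<And>n. norm (f n) \<le> C * q ^ n" "0 \<le> q" "q < 1"
  shows "summable (\<lambda>n. norm (f n))"
proof (rule summable_comparison_test'[where g="\<lambda>n. C * q ^ n" and N=0])
  show "summable (\<lambda>n. C * q ^ n)" using assms by (intro summable_mult summable_geometric) auto
  show "norm (norm (f n)) \<le> C * q ^ n" if "0 \<le> n" for n using assms(1)[of n] by simp
qed

lemma ps_unique:
  fixes e :: "nat \<Rightarrow> real" and v :: "nat \<Rightarrow> complex"
  assumes eb: "\<And>N. \<bar>e N\<bar> \<le> C * D ^ N" and D: "0 < D" and v0: "v \<longlonglongrightarrow> 0" and vnz: "\<And>j. v j \<noteq> 0"
    and vs: "\<And>j. (\<Sum>N. of_real (e N) * v j ^ N) = 0"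
  shows "e N = 0"
proof (induction N rule: less_induct)
  case (less N)
  define Kc :: complex where "Kc = of_real (1 / (2 * D))"
  define g where "g w = (\<Sum>n. of_real (e (n + N)) * w ^ n)" for w :: complex
  have C0: "0 \<le> C" using eb[of 0] by auto
  have nK: "norm Kc = 1 / (2 * D)" unfolding Kc_def norm_of_real using D by simp
  have sK: "summable (\<lambda>n. of_real (e (n + N)) * Kc ^ n)"
  proof -
    have "norm (of_real (e (n + N)) * Kc ^ n) \<le> (C * D ^ N) * (1/2) ^ n" for n
    proof -
      have "norm (of_real (e (n + N)) * Kc ^ n) = \<bar>e (n + N)\<bar> * (1 / (2 * D)) ^ n"
        by (simp add: norm_mult norm_power nK)
      also have "\<dots> \<le> C * D ^ (n + N) * (1 / (2 * D)) ^ n"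
        using eb[of "n + N"] D by (intro mult_right_mono) auto
      also have "\<dots> = (C * D ^ N) * (1/2) ^ n" using D by (simp add: power_add power_divide field_simps)
      finally show ?thesis .
    qed
    then have "summable (\<lambda>n. norm (of_real (e (n + N)) * Kc ^ n))"
      by (rule summable_geo_bound) auto
    then show ?thesis by (rule summable_norm_cancel)
  qed
  have gc: "isCont g 0" unfolding g_def by (rule isCont_powser[OF sK]) (use D in \<open>simp add: Kc_def\<close>)
  have g0: "g 0 = of_real (e N)" unfolding g_def by (subst powser_zero) simp
  have ev: "eventually (\<lambda>j. norm (v j) < 1 / (2 * D)) sequentially"
  proof -
    have "(\<lambda>j. norm (v j)) \<longlonglongrightarrow> 0" using tendsto_norm[OF v0] by simp
    then show ?thesis by (rule order_tendstoD) (use D in simp)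
  qed
  have gv: "eventually (\<lambda>j. g (v j) = 0) sequentially"
    using ev
  proof eventually_elim
    case (elim j)
    have sv: "summable (\<lambda>n. of_real (e n) * v j ^ n)"
    proof -
      have "norm (of_real (e n) * v j ^ n) \<le> C * (1/2) ^ n" for n
      proof -
        have "norm (of_real (e n) * v j ^ n) = \<bar>e n\<bar> * norm (v j) ^ n" by (simp add: norm_mult norm_power)
        also have "\<dots> \<le> C * D ^ n * (1 / (2 * D)) ^ n"
          using eb[of n] elim by (intro mult_mono power_mono) auto
        also have "\<dots> = C * (1/2) ^ n" using D by (simp add: power_divide field_simps)
        finally show ?thesis .
      qed
      then have "summable (\<lambda>n. norm (of_real (e n) * v j ^ n))" by (rule summable_geo_bound) auto
      then show ?thesis by (rule summable_norm_cancel)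
    qed
    have "0 = (\<Sum>n. of_real (e n) * v j ^ n)" using vs[of j] by simp
    also have "\<dots> = (\<Sum>n. of_real (e (n + N)) * v j ^ (n + N)) + (\<Sum>n<N. of_real (e n) * v j ^ n)"
      by (rule suminf_split_initial_segment[OF sv])
    also have "(\<Sum>n<N. of_real (e n) * v j ^ n) = 0" using less.IH by simp
    also have "(\<Sum>n. of_real (e (n + N)) * v j ^ (n + N)) = v j ^ N * g (v j)"
    proof -
      have "summable (\<lambda>n. of_real (e (n + N)) * v j ^ n)"
      proof -
        have "summable (\<lambda>n. of_real (e (n + N)) * v j ^ (n + N))"
          using sv summable_iff_shift[of "\<lambda>n. of_real (e n) * v j ^ n" N] by simp
        then have "summable (\<lambda>n. (1 / v j ^ N) * (of_real (e (n + N)) * v j ^ (n + N)))"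
          by (rule summable_mult)
        then show ?thesis using vnz[of j] by (simp add: power_add)
      qed
      then have "(\<Sum>n. v j ^ N * (of_real (e (n + N)) * v j ^ n)) = v j ^ N * g (v j)"
        unfolding g_def by (rule suminf_mult)
      then show ?thesis by (simp add: power_add mult_ac)
    qed
    finally show ?case using vnz[of j] by simp
  qed
  have "(\<lambda>j. g (v j)) \<longlonglongrightarrow> g 0" using isCont_tendsto_compose[OF gc v0] .
  moreover have "(\<lambda>j. g (v j)) \<longlonglongrightarrow> 0"
    using tendsto_cong[OF gv] by simp
  ultimately have "g 0 = 0" using LIMSEQ_unique by blast
  then show ?case using g0 by simp
qed


context rmu begin

interpretation m: prob_space mu by (rule P)

lemma K_le1: "renewal_K mu (enat n) \<le> 1"
proof (cases n)
  case 0 then show ?thesis by (simp add: K_simps)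
next
  case (Suc k)
  have "(\<integral>x. (1 - x) ^ k * x \<partial>mu) \<le> (\<integral>x. 1 \<partial>mu)"
  proof (rule integral_mono_AE[OF integrable_geo])
    show "integrable mu (\<lambda>x. 1::real)" by simp
    show "AE x in mu. (1 - x) ^ k * x \<le> 1"
      using AE01
    proof eventually_elim
      case (elim x)
      have "(1 - x) ^ k \<le> 1" by (rule power_le_one) (use elim in auto)
      then show ?case by (rule mult_le_one) (use elim in auto)
    qed
  qed
  then show ?thesis using Suc by (simp add: K_simps m.prob_space)
qed

lemma series_D:
  assumes z: "Im z > 0" "2 \<le> cmod z"
  shows "(\<integral>x. hz z x \<partial>mu) = - (\<Sum>n. of_real (renewal_K mu (enat (Suc n))) * (1 / z) ^ n)"
proof -
  define w where "w = 1 / z"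
  have znz: "z \<noteq> 0" using z by auto
  have wnz: "w \<noteq> 0" using znz by (simp add: w_def)
  have nw: "cmod w \<le> 1/2" using z by (simp add: w_def norm_divide divide_le_eq)
  define f where "f n x = of_real (x * (1 - x) ^ n) * w ^ n" for n and x :: real
  have fb: "norm (f n x) \<le> cmod w ^ n" if "0 \<le> x" "x \<le> 1" for n x
  proof -
    have "\<bar>x * (1 - x) ^ n\<bar> \<le> 1" using that by (simp add: abs_mult mult_le_one power_le_one)
    then show ?thesis unfolding f_def norm_mult norm_power norm_of_real
      by (simp add: mult_left_le_one_le)
  qed
  have pw: "hz z x = - (\<Sum>n. f n x)" if "0 \<le> x" "x \<le> 1" for x
  proof -
    define q where "q = of_real (1 - x) * w"
    have nq: "norm q \<le> 1/2" unfolding q_def norm_mult norm_of_real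
      using that nw by (smt (verit) mult_left_le_one_le norm_ge_zero)
    have "(\<lambda>n. q ^ n) sums (1 / (1 - q))" by (rule geometric_sums) (use nq in simp)
    then have "(\<lambda>n. of_real x * q ^ n) sums (of_real x * (1 / (1 - q)))" by (rule sums_mult)
    moreover have "of_real x * q ^ n = f n x" for n unfolding f_def q_def by (simp add: power_mult_distrib)
    ultimately have s: "(\<lambda>n. f n x) sums (of_real x / (1 - q))" by simp
    have q1: "1 - q \<noteq> 0" using nq by auto
    have d1: "1 - z - of_real x \<noteq> 0" using denom_nz z by auto
    have "hz z x = - (of_real x / (1 - q))"
      unfolding hz_def q_def using q1 d1 znz by (simp add: w_def field_simps)
    then show ?thesis using s by (simp add: sums_iff)
  qed
  have fm: "f n \<in> borel_measurable borel" for n unfolding f_def by measurable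
  have fi: "integrable mu (f n)" for n
    by (rule integrable_bdd[where B="cmod w ^ n"]) (use fm fb in auto)
  have fint: "(\<integral>x. f n x \<partial>mu) = of_real (renewal_K mu (enat (Suc n))) * w ^ n" for n
  proof -
    have "(\<integral>x. f n x \<partial>mu) = (\<integral>x. complex_of_real (x * (1 - x) ^ n) \<partial>mu) * w ^ n"
      unfolding f_def by (rule integral_mult_left_zero)
    also have "\<dots> = of_real (\<integral>x. x * (1 - x) ^ n \<partial>mu) * w ^ n" by (simp only: integral_complex_of_real)
    also have "(\<integral>x. x * (1 - x) ^ n \<partial>mu) = renewal_K mu (enat (Suc n))"
      by (simp add: K_simps mult.commute)
    finally show ?thesis .
  qed
  have "(\<integral>x. hz z x \<partial>mu) = (\<integral>x. - (\<Sum>n. f n x) \<partial>mu)"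
    by (rule integral_cong_AE) (use AE01 pw fm in \<open>auto simp: measurable_cong_sets[OF S refl]\<close>)
  also have "\<dots> = - (\<integral>x. (\<Sum>n. f n x) \<partial>mu)" by simp
  also have "(\<integral>x. (\<Sum>n. f n x) \<partial>mu) = (\<Sum>n. (\<integral>x. f n x \<partial>mu))"
  proof (rule integral_suminf)
    show "integrable mu (f n)" for n by (rule fi)
    show "AE x in mu. summable (\<lambda>n. norm (f n x))"
      using AE01 by eventually_elim (rule summable_geo_bound[where C=1 and q="cmod w"], use fb nw in auto)
    show "summable (\<lambda>n. \<integral>x. norm (f n x) \<partial>mu)"
    proof (rule summable_norm_cancel, rule summable_geo_bound[where C=1 and q="cmod w"])
      fix n
      have "(\<integral>x. norm (f n x) \<partial>mu) \<le> (\<integral>x. cmod w ^ n \<partial>mu)"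
        by (rule integral_mono_AE) (use fi AE01 fb in auto)
      moreover have "0 \<le> (\<integral>x. norm (f n x) \<partial>mu)" by simp
      ultimately show "norm (\<integral>x. norm (f n x) \<partial>mu) \<le> 1 * cmod w ^ n" by (simp add: m.prob_space)
    qed (use nw in auto)
  qed
  also have "(\<Sum>n. (\<integral>x. f n x \<partial>mu)) = (\<Sum>n. of_real (renewal_K mu (enat (Suc n))) * w ^ n)"
    by (simp add: fint)
  finally show ?thesis by (simp add: w_def)
qed

end


lemma series_S:
  fixes \<nu> :: "real measure" and R :: real
  assumes rd: "real_distribution \<nu>" and supp: "AE x in \<nu>. \<bar>x\<bar> \<le> R" and R: "1 \<le> R"
    and z: "Im z > 0" "2 * R \<le> cmod z"
  shows "stieltjes \<nu> z = - (\<Sum>N. of_real (\<integral>x. x ^ N \<partial>\<nu>) * (1 / z) ^ Suc N)"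
proof -
  interpret \<nu>: real_distribution \<nu> by (rule rd)
  have mc: "measurable \<nu> = measurable borel" by (intro ext measurable_cong_sets) auto
  have sp: "space \<nu> = UNIV" using \<nu>.events_eq_borel by (metis sets_eq_imp_space_eq space_borel)
  have p1: "measure \<nu> UNIV = 1" using \<nu>.prob_space sp by simp
  define w where "w = 1 / z"
  have znz: "z \<noteq> 0" using z by auto
  have wnz: "w \<noteq> 0" using znz by (simp add: w_def)
  have cz: "0 < cmod z" using znz by simp
  have e: "R * cmod w = R / cmod z" by (simp add: w_def norm_divide)
  have "R / cmod z \<le> 1/2" using cz z(2) by (simp add: divide_le_eq)
  then have nwR: "R * cmod w \<le> 1/2" using e by simp
  have nw0: "0 \<le> cmod w" by simp
  define f where "f N x = of_real (x ^ N) * w ^ Suc N" for N and x :: real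
  have fm: "f N \<in> borel_measurable \<nu>" for N unfolding f_def mc by measurable
  have fb: "norm (f N x) \<le> cmod w * (R * cmod w) ^ N" if "\<bar>x\<bar> \<le> R" for N x
  proof -
    have "\<bar>x\<bar> ^ N \<le> R ^ N" using that by (intro power_mono) auto
    then have "\<bar>x\<bar> ^ N * (cmod w ^ N * cmod w) \<le> R ^ N * (cmod w ^ N * cmod w)"
      by (intro mult_right_mono) auto
    then show ?thesis unfolding f_def norm_mult norm_power norm_of_real
      by (simp add: power_abs power_mult_distrib mult_ac)
  qed
  have fi: "integrable \<nu> (f N)" for N
    by (rule \<nu>.integrable_const_bound[where B="cmod w * (R * cmod w) ^ N"]) (use supp fb fm in auto)
  have pw: "1 / (complex_of_real x - z) = - (\<Sum>N. f N x)" if "\<bar>x\<bar> \<le> R" for x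
  proof -
    define q where "q = of_real x * w"
    have nq: "norm q \<le> 1/2" unfolding q_def norm_mult norm_of_real
      using that nwR by (smt (verit) mult_right_mono norm_ge_zero)
    have "(\<lambda>N. q ^ N) sums (1 / (1 - q))" by (rule geometric_sums) (use nq in simp)
    then have "(\<lambda>N. w * q ^ N) sums (w * (1 / (1 - q)))" by (rule sums_mult)
    moreover have "w * q ^ N = f N x" for N unfolding f_def q_def by (simp add: power_mult_distrib mult_ac)
    ultimately have s: "(\<lambda>N. f N x) sums (w / (1 - q))" by simp
    have q1: "1 - q \<noteq> 0" using nq by auto
    have d1: "complex_of_real x - z \<noteq> 0" using z by (auto simp: complex_eq_iff)
    have "1 / (complex_of_real x - z) = - (w / (1 - q))"
      unfolding q_def using q1 d1 znz by (simp add: w_def field_simps)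
    then show ?thesis using s by (simp add: sums_iff)
  qed
  have fint: "(\<integral>x. f N x \<partial>\<nu>) = of_real (\<integral>x. x ^ N \<partial>\<nu>) * w ^ Suc N" for N
  proof -
    have "(\<integral>x. f N x \<partial>\<nu>) = (\<integral>x. complex_of_real (x ^ N) \<partial>\<nu>) * w ^ Suc N"
      unfolding f_def by (rule integral_mult_left_zero)
    also have "\<dots> = of_real (\<integral>x. x ^ N \<partial>\<nu>) * w ^ Suc N" by (simp only: integral_complex_of_real)
    finally show ?thesis .
  qed
  have "stieltjes \<nu> z = (\<integral>x. - (\<Sum>N. f N x) \<partial>\<nu>)"
    unfolding stieltjes_def
    by (rule integral_cong_AE) (use supp pw fm in \<open>auto simp: mc\<close>)
  also have "\<dots> = - (\<integral>x. (\<Sum>N. f N x) \<partial>\<nu>)" by simp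
  also have "(\<integral>x. (\<Sum>N. f N x) \<partial>\<nu>) = (\<Sum>N. (\<integral>x. f N x \<partial>\<nu>))"
  proof (rule integral_suminf)
    show "integrable \<nu> (f N)" for N by (rule fi)
    show "AE x in \<nu>. summable (\<lambda>N. norm (f N x))"
      using supp by eventually_elim (rule summable_geo_bound[where C="cmod w" and q="R * cmod w"], use fb nwR R in auto)
    show "summable (\<lambda>N. \<integral>x. norm (f N x) \<partial>\<nu>)"
    proof (rule summable_norm_cancel, rule summable_geo_bound[where C="cmod w" and q="R * cmod w"])
      fix N
      have "(\<integral>x. norm (f N x) \<partial>\<nu>) \<le> (\<integral>x. cmod w * (R * cmod w) ^ N \<partial>\<nu>)"
        by (rule integral_mono_AE) (use fi supp fb in auto)
      moreover have "0 \<le> (\<integral>x. norm (f N x) \<partial>\<nu>)" by simp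
      ultimately show "norm (\<integral>x. norm (f N x) \<partial>\<nu>) \<le> cmod w * (R * cmod w) ^ N" by (simp add: p1)
    qed (use nwR R in auto)
  qed
  also have "(\<Sum>N. (\<integral>x. f N x \<partial>\<nu>)) = (\<Sum>N. of_real (\<integral>x. x ^ N \<partial>\<nu>) * w ^ Suc N)"
    by (simp add: fint)
  finally show ?thesis by (simp add: w_def)
qed


context rmu begin

interpretation m: prob_space mu by (rule P)

lemma key_series:
  fixes \<nu> :: "real measure"
  assumes rd: "real_distribution \<nu>" and supp: "AE x in \<nu>. \<bar>x\<bar> \<le> Rb \<beta>"
    and st: "\<And>z. Im z > 0 \<Longrightarrow> stieltjes \<nu> z = 1 / Dz \<beta> z"
    and z: "Im z > 0" "2 * Rb \<beta> \<le> cmod z"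
  defines "a \<equiv> \<lambda>N. \<integral>x. x ^ N \<partial>\<nu>"
  defines "b \<equiv> \<lambda>n. if n = 0 then 1 else - exp \<beta> * renewal_K mu (enat n)"
  shows "(\<lambda>k. of_real (\<Sum>i\<le>k. a i * b (k - i)) * (1 / z) ^ k) sums 1"
proof -
  interpret \<nu>: real_distribution \<nu> by (rule rd)
  define R where "R = Rb \<beta>"
  have R3: "3 \<le> R" unfolding R_def Rb_def using exp_gt_zero[of \<beta>] by linarith
  have mc: "measurable \<nu> = measurable borel" by (intro ext measurable_cong_sets) auto
  have sp: "space \<nu> = UNIV" using \<nu>.events_eq_borel by (metis sets_eq_imp_space_eq space_borel)
  have p1: "measure \<nu> UNIV = 1" using \<nu>.prob_space sp by simp
  define w where "w = 1 / z"
  have znz: "z \<noteq> 0" using z by auto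
  have cz: "0 < cmod z" using znz by simp
  have wz: "w * z = 1" using znz by (simp add: w_def)
  have "R / cmod z \<le> 1/2" using cz z(2) by (simp add: divide_le_eq R_def)
  then have nwR: "R * cmod w \<le> 1/2" by (simp add: w_def norm_divide)
  have nw: "cmod w \<le> 1/2" using nwR R3
    by (smt (verit, ccfv_SIG) mult_le_cancel_right1 norm_ge_zero)
  have ab: "\<bar>a N\<bar> \<le> R ^ N" for N
  proof -
    have "\<bar>a N\<bar> \<le> (\<integral>x. \<bar>x ^ N\<bar> \<partial>\<nu>)" unfolding a_def by (rule integral_abs_bound)
    also have "\<dots> \<le> (\<integral>x. R ^ N \<partial>\<nu>)"
    proof (rule integral_mono_AE)
      show "integrable \<nu> (\<lambda>x. \<bar>x ^ N\<bar>)"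
        by (rule \<nu>.integrable_const_bound[where B="R ^ N"])
           (use supp in \<open>auto simp: mc power_abs R_def intro: power_mono elim!: eventually_mono\<close>)
      show "AE x in \<nu>. \<bar>x ^ N\<bar> \<le> R ^ N"
        using supp by eventually_elim (auto simp: power_abs R_def intro: power_mono)
    qed simp
    also have "\<dots> = R ^ N" by (simp add: p1)
    finally show ?thesis .
  qed
  define E where "E = max 1 (exp \<beta>)"
  have bb: "\<bar>b n\<bar> \<le> E" for n
  proof (cases "n = 0")
    case True then show ?thesis by (simp add: b_def E_def)
  next
    case False
    have "\<bar>exp \<beta> * renewal_K mu (enat n)\<bar> \<le> exp \<beta> * 1"
      using K_nonneg[of "enat n"] K_le1[of n] by (simp add: abs_mult mult_left_le)
    then show ?thesis using False by (simp add: b_def E_def)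
  qed
  have sA: "summable (\<lambda>N. norm (of_real (a N) * w ^ N))"
  proof (rule summable_geo_bound[where C=1 and q="R * cmod w"])
    fix N
    have "\<bar>a N\<bar> * cmod w ^ N \<le> R ^ N * cmod w ^ N" using ab[of N] by (intro mult_right_mono) auto
    then show "norm (of_real (a N) * w ^ N) \<le> 1 * (R * cmod w) ^ N"
      by (simp add: norm_mult norm_power power_mult_distrib)
  qed (use nwR R3 in auto)
  have sB: "summable (\<lambda>n. norm (of_real (b n) * w ^ n))"
  proof (rule summable_geo_bound[where C=E and q="cmod w"])
    fix n
    have "\<bar>b n\<bar> * cmod w ^ n \<le> E * cmod w ^ n" using bb[of n] by (intro mult_right_mono) auto
    then show "norm (of_real (b n) * w ^ n) \<le> E * cmod w ^ n" by (simp add: norm_mult norm_power)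
  qed (use nw in auto)
  have sK: "summable (\<lambda>n. of_real (renewal_K mu (enat (Suc n))) * w ^ n)"
  proof (rule summable_norm_cancel, rule summable_geo_bound[where C=1 and q="cmod w"])
    fix n
    have "renewal_K mu (enat (Suc n)) * cmod w ^ n \<le> 1 * cmod w ^ n"
      using K_le1[of "Suc n"] by (intro mult_right_mono) auto
    then show "norm (of_real (renewal_K mu (enat (Suc n))) * w ^ n) \<le> 1 * cmod w ^ n"
      using K_nonneg[of "enat (Suc n)"] by (simp add: norm_mult norm_power)
  qed (use nw in auto)
  define A where "A = (\<Sum>N. of_real (a N) * w ^ N)"
  define B where "B = (\<Sum>n. of_real (b n) * w ^ n)"
  define Kt where "Kt = (\<Sum>n. of_real (renewal_K mu (enat (Suc n))) * w ^ n)"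
  define e :: complex where "e = of_real (exp \<beta>)"
  have Se: "stieltjes \<nu> z = - (w * A)"
  proof -
    have "stieltjes \<nu> z = - (\<Sum>N. of_real (a N) * w ^ Suc N)"
      using series_S[OF rd supp _ z(1)] R3 z(2) by (simp add: a_def w_def R_def)
    also have "(\<Sum>N. of_real (a N) * w ^ Suc N) = (\<Sum>N. w * (of_real (a N) * w ^ N))"
      by (simp add: mult_ac)
    also have "\<dots> = w * A" unfolding A_def by (rule suminf_mult[OF summable_norm_cancel[OF sA]])
    finally show ?thesis .
  qed
  have De: "Dz \<beta> z = - z + e * Kt"
  proof -
    have "(\<integral>x. hz z x \<partial>mu) = - Kt"
      using series_D[OF z(1)] R3 z(2) by (simp add: Kt_def w_def R_def)
    then show ?thesis unfolding Dz_def e_def by (simp add: exp_of_real)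
  qed
  have SD: "stieltjes \<nu> z * Dz \<beta> z = 1" using st[OF z(1)] Dz_nz[OF z(1)] by simp
  have Be: "B = 1 - e * w * Kt"
  proof -
    have sb: "summable (\<lambda>n. of_real (b n) * w ^ n)" by (rule summable_norm_cancel[OF sB])
    have "(\<Sum>n. of_real (b (Suc n)) * w ^ Suc n) = B - of_real (b 0) * w ^ 0"
      unfolding B_def by (rule suminf_split_head[OF sb])
    moreover have "(\<Sum>n. of_real (b (Suc n)) * w ^ Suc n) =
         (\<Sum>n. (- e * w) * (of_real (renewal_K mu (enat (Suc n))) * w ^ n))"
      by (simp add: b_def e_def mult_ac)
    moreover have "\<dots> = (- e * w) * Kt" unfolding Kt_def by (rule suminf_mult[OF sK])
    ultimately have eq: "B - 1 = - (e * w * Kt)" by (simp add: b_def)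
    have "B = (B - 1) + 1" by simp
    also have "\<dots> = 1 - e * w * Kt" unfolding eq by simp
    finally show ?thesis .
  qed
  have AB: "A * B = 1"
  proof -
    have "A * B = A - e * w * A * Kt" by (simp add: Be algebra_simps)
    moreover have "stieltjes \<nu> z * Dz \<beta> z = (w * z) * A - e * w * A * Kt"
      unfolding Se De by (simp add: algebra_simps)
    ultimately show ?thesis using SD wz by simp
  qed
  have cp: "A * B = (\<Sum>k. \<Sum>i\<le>k. (of_real (a i) * w ^ i) * (of_real (b (k - i)) * w ^ (k - i)))"
    unfolding A_def B_def by (rule Cauchy_product[OF sA sB])
  have inner: "(\<Sum>i\<le>k. (of_real (a i) * w ^ i) * (of_real (b (k - i)) * w ^ (k - i))) =
       of_real (\<Sum>i\<le>k. a i * b (k - i)) * w ^ k" for k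
  proof -
    have "(\<Sum>i\<le>k. (of_real (a i) * w ^ i) * (of_real (b (k - i)) * w ^ (k - i))) =
          (\<Sum>i\<le>k. of_real (a i * b (k - i)) * w ^ k)"
    proof (intro sum.cong refl)
      fix i assume "i \<in> {..k}"
      then have "w ^ i * w ^ (k - i) = w ^ k" by (simp add: power_add[symmetric])
      then show "(of_real (a i) * w ^ i) * (of_real (b (k - i)) * w ^ (k - i)) = of_real (a i * b (k - i)) * w ^ k"
        by (simp add: mult_ac)
    qed
    also have "\<dots> = of_real (\<Sum>i\<le>k. a i * b (k - i)) * w ^ k" by (simp add: sum_distrib_right)
    finally show ?thesis .
  qed
  have sC: "summable (\<lambda>k. \<Sum>i\<le>k. (of_real (a i) * w ^ i) * (of_real (b (k - i)) * w ^ (k - i)))"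
    by (rule summable_Cauchy_product[OF sA sB])
  then have "summable (\<lambda>k. of_real (\<Sum>i\<le>k. a i * b (k - i)) * w ^ k)" by (simp only: inner)
  moreover have "(\<Sum>k. of_real (\<Sum>i\<le>k. a i * b (k - i)) * w ^ k) = 1"
    using AB cp by (simp only: inner)
  ultimately have "(\<lambda>k. of_real (\<Sum>i\<le>k. a i * b (k - i)) * w ^ k) sums 1"
    by (simp only: sums_iff)
  then show ?thesis unfolding w_def .
qed

end


context rmu begin

interpretation m: prob_space mu by (rule P)

lemma moments:
  fixes \<nu> :: "real measure"
  assumes rd: "real_distribution \<nu>" and supp: "AE x in \<nu>. \<bar>x\<bar> \<le> Rb \<beta>"
    and st: "\<And>z. Im z > 0 \<Longrightarrow> stieltjes \<nu> z = 1 / Dz \<beta> z"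
  shows "integrable \<nu> (\<lambda>x. x ^ N) \<and> partition_fn mu \<beta> N = (\<integral>x. x ^ N \<partial>\<nu>)"
proof -
  interpret \<nu>: real_distribution \<nu> by (rule rd)
  define R where "R = Rb \<beta>"
  have R3: "3 \<le> R" unfolding R_def Rb_def using exp_gt_zero[of \<beta>] by linarith
  have mc: "measurable \<nu> = measurable borel" by (intro ext measurable_cong_sets) auto
  have sp: "space \<nu> = UNIV" using \<nu>.events_eq_borel by (metis sets_eq_imp_space_eq space_borel)
  have p1: "measure \<nu> UNIV = 1" using \<nu>.prob_space sp by simp
  have intN: "integrable \<nu> (\<lambda>x. x ^ N)" for N
    by (rule \<nu>.integrable_const_bound[where B="R ^ N"])
       (use supp in \<open>auto simp: mc power_abs R_def intro: power_mono elim!: eventually_mono\<close>)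
  define a where "a N = (\<integral>x. x ^ N \<partial>\<nu>)" for N
  define b where "b n = (if n = 0 then 1 else - exp \<beta> * renewal_K mu (enat n))" for n
  define d where "d k = (\<Sum>i\<le>k. a i * b (k - i))" for k
  have ab: "\<bar>a N\<bar> \<le> R ^ N" for N
  proof -
    have "\<bar>a N\<bar> \<le> (\<integral>x. \<bar>x ^ N\<bar> \<partial>\<nu>)" unfolding a_def by (rule integral_abs_bound)
    also have "\<dots> \<le> (\<integral>x. R ^ N \<partial>\<nu>)"
    proof (rule integral_mono_AE)
      show "integrable \<nu> (\<lambda>x. \<bar>x ^ N\<bar>)" using intN by simp
      show "AE x in \<nu>. \<bar>x ^ N\<bar> \<le> R ^ N"
        using supp by eventually_elim (auto simp: power_abs R_def intro: power_mono)
    qed simp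
    also have "\<dots> = R ^ N" by (simp add: p1)
    finally show ?thesis .
  qed
  define E where "E = max 1 (exp \<beta>)"
  have bb: "\<bar>b n\<bar> \<le> E" for n
  proof (cases "n = 0")
    case True then show ?thesis by (simp add: b_def E_def)
  next
    case False
    have "\<bar>exp \<beta> * renewal_K mu (enat n)\<bar> \<le> exp \<beta> * 1"
      using K_nonneg[of "enat n"] K_le1[of n] by (simp add: abs_mult mult_left_le)
    then show ?thesis using False by (simp add: b_def E_def)
  qed
  have db: "\<bar>d k\<bar> \<le> E * (2 * R) ^ k" for k
  proof -
    have "\<bar>d k\<bar> \<le> (\<Sum>i\<le>k. \<bar>a i * b (k - i)\<bar>)" unfolding d_def by (rule sum_abs)
    also have "\<dots> \<le> (\<Sum>i\<le>k. R ^ k * E)"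
    proof (rule sum_mono)
      fix i assume "i \<in> {..k}"
      then have "R ^ i \<le> R ^ k" using R3 by (intro power_increasing) auto
      then have "\<bar>a i\<bar> \<le> R ^ k" using ab[of i] by linarith
      then show "\<bar>a i * b (k - i)\<bar> \<le> R ^ k * E" unfolding abs_mult
        using bb[of "k - i"] by (intro mult_mono) auto
    qed
    also have "\<dots> = real (Suc k) * (R ^ k * E)" by simp
    also have "\<dots> \<le> 2 ^ k * (R ^ k * E)"
    proof (rule mult_right_mono)
      have "Suc k \<le> 2 ^ k" by (rule Suc_leI[OF less_exp])
      then show "real (Suc k) \<le> 2 ^ k" by (metis of_nat_le_iff of_nat_numeral of_nat_power)
      show "0 \<le> R ^ k * E" using R3 by (simp add: E_def)
    qed
    also have "\<dots> = E * (2 * R) ^ k" by (simp add: power_mult_distrib)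
    finally show ?thesis .
  qed
  define zj where "zj j = of_real (real j + 2 * R) * \<i>" for j :: nat
  define v where "v j = 1 / zj j" for j
  have zjn: "cmod (zj j) = real j + 2 * R" for j
    unfolding zj_def norm_mult norm_ii norm_of_real using R3 by simp
  have zjI: "Im (zj j) > 0" "2 * R \<le> cmod (zj j)" for j
    using R3 zjn[of j] by (auto simp: zj_def)
  have vnz: "v j \<noteq> 0" for j using zjI(1)[of j] by (auto simp: v_def)
  have v0: "v \<longlonglongrightarrow> 0"
  proof (rule tendsto_norm_zero_cancel)
    have "norm (v j) = 1 / (2 * R + real j)" for j unfolding v_def norm_divide zjn by simp
    moreover have "(\<lambda>j. 1 / (2 * R + real j)) \<longlonglongrightarrow> 0"
      by (rule tendsto_divide_0[OF tendsto_const filterlim_at_top_imp_at_infinity[OF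
            filterlim_tendsto_add_at_top[OF tendsto_const filterlim_real_sequentially]]])
    ultimately show "(\<lambda>j. norm (v j)) \<longlonglongrightarrow> 0" by simp
  qed
  define e where "e k = d k - (if k = 0 then 1 else 0)" for k
  have es: "(\<Sum>k. of_real (e k) * v j ^ k) = 0" for j
  proof -
    have s1: "(\<lambda>k. of_real (d k) * v j ^ k) sums 1"
      using key_series[OF rd supp st zjI(1)[of j] zjI(2)[of j, unfolded R_def]]
      by (simp add: v_def d_def a_def b_def)
    have s2: "(\<lambda>k. if k = 0 then (1::complex) else 0) sums 1" using sums_single[of 0 "\<lambda>_. 1::complex"] by simp
    have "(\<lambda>k. of_real (d k) * v j ^ k - (if k = 0 then 1 else 0)) sums (1 - 1)" by (rule sums_diff[OF s1 s2])
    moreover have "(\<lambda>k. of_real (d k) * v j ^ k - (if k = 0 then 1 else 0)) = (\<lambda>k. of_real (e k) * v j ^ k)"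
      by (auto simp: e_def fun_eq_iff algebra_simps)
    ultimately show ?thesis by (simp add: sums_iff)
  qed
  have eb: "\<bar>e k\<bar> \<le> (E + 1) * (2 * R) ^ k" for k
  proof -
    have "1 \<le> (2 * R) ^ k" using R3 by (intro one_le_power) auto
    then show ?thesis using db[of k] unfolding e_def by (auto simp: algebra_simps)
  qed
  have e0: "e k = 0" for k
    by (rule ps_unique[OF eb _ v0 vnz es]) (use R3 in auto)
  have dk: "d k = (if k = 0 then 1 else 0)" for k using e0[of k] by (simp add: e_def split: if_splits)
  have aZ: "a N = partition_fn mu \<beta> N" for N
  proof (induction N rule: less_induct)
    case (less N)
    show ?case
    proof (cases N)
      case 0
      then show ?thesis using dk[of 0] by (simp add: d_def b_def partition_fn_def)
    next
      case (Suc M)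
      have "d N = a N * b 0 + (\<Sum>i<N. a i * b (N - i))"
        unfolding d_def Suc by (simp add: lessThan_Suc_atMost[symmetric])
      then have d1: "d N = a N + (\<Sum>i<N. a i * b (N - i))" by (simp add: b_def)
      have d2: "(\<Sum>i<N. a i * b (N - i)) = - (\<Sum>i<N. exp \<beta> * renewal_K mu (enat (N - i)) * a i)"
        by (simp add: b_def sum_negf[symmetric] mult_ac)
      have d3: "d N = 0" using dk[of N] Suc by simp
      have "a N = (\<Sum>i<N. exp \<beta> * renewal_K mu (enat (N - i)) * a i)"
        using d1 d2 d3 by linarith
      also have "\<dots> = (\<Sum>i<N. exp \<beta> * renewal_K mu (enat (N - i)) * partition_fn mu \<beta> i)"
        using less.IH by simp
      also have "\<dots> = (\<Sum>n\<in>{1..N}. exp \<beta> * renewal_K mu (enat n) * partition_fn mu \<beta> (N - n))"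
        by (rule sum.reindex_bij_witness[where i="\<lambda>n. N - n" and j="\<lambda>i. N - i"]) auto
      also have "\<dots> = partition_fn mu \<beta> N" using Suc by (simp add: Z_rec)
      finally show ?thesis .
    qed
  qed
  show ?thesis using intN aZ by (simp add: a_def)
qed

end


context rmu begin

interpretation m: prob_space mu by (rule P)

lemma hz_int:
  assumes z: "Im z > 0"
  shows "(\<integral>x. hz z x \<partial>mu) = - z - z * (1 - z) * stieltjes mu (1 - z)"
proof -
  define g where "g x = 1 / (complex_of_real x - (1 - z))" for x
  have gm: "g \<in> borel_measurable borel" unfolding g_def by measurable
  have gb: "norm (g x) \<le> 1 / Im z" for x
  proof -
    have "Im z \<le> cmod (complex_of_real x - (1 - z))"
      using abs_Im_le_cmod[of "complex_of_real x - (1 - z)"] z by simp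
    then show ?thesis using z by (simp add: g_def norm_divide frac_le)
  qed
  have gi: "integrable mu g" by (rule integrable_bdd[where B="1 / Im z"]) (use gm gb in auto)
  have pw: "hz z x = - z + (- (z * (1 - z))) * g x" for x
  proof -
    have d1: "1 - z - complex_of_real x \<noteq> 0" using denom_nz z by auto
    have d2: "complex_of_real x - (1 - z) \<noteq> 0" using d1 by (metis eq_iff_diff_eq_0 diff_diff_eq2 diff_add_cancel right_minus_eq minus_diff_eq)
    show ?thesis unfolding hz_def g_def using d1 d2 by (simp add: field_simps)
  qed
  have "(\<integral>x. hz z x \<partial>mu) = (\<integral>x. - z + (- (z * (1 - z))) * g x \<partial>mu)" by (simp add: pw)
  also have "\<dots> = (\<integral>x. - z \<partial>mu) + (\<integral>x. (- (z * (1 - z))) * g x \<partial>mu)"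
    by (rule Bochner_Integration.integral_add) (use gi in auto)
  also have "(\<integral>x. - z \<partial>mu) = - z" by (simp add: m.prob_space)
  also have "(\<integral>x. (- (z * (1 - z))) * g x \<partial>mu) = (- (z * (1 - z))) * (\<integral>x. g x \<partial>mu)"
    by (rule integral_mult_right_zero)
  also have "(\<integral>x. g x \<partial>mu) = stieltjes mu (1 - z)" unfolding stieltjes_def g_def ..
  finally show ?thesis by simp
qed

end

theorem theorem3:
  fixes mu :: "real measure" and \<beta> :: real
  assumes "prob_space mu"
    and "sets mu = sets borel"
    and "emeasure mu {0..1} = 1"
  shows "\<exists>\<nu> :: real measure. prob_space \<nu> \<and> sets \<nu> = sets borel \<and>
     (\<forall>z. Im z > 0 \<longrightarrow>
        stieltjes \<nu> z * (exp (complex_of_real \<beta>) * stieltjes mu (1 - z)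
                           - (1 - exp (complex_of_real \<beta>)) / (1 - z))
        = 1 / (z * (1 - z))) \<and>
     (\<forall>z. Im z > 0 \<longrightarrow>
        stieltjes \<nu> z = inverse (- z - exp (complex_of_real \<beta>) *
           (\<integral>x. z * complex_of_real x / (1 - z - complex_of_real x) \<partial>mu))) \<and>
     (\<forall>N::nat. integrable \<nu> (\<lambda>x. x ^ N) \<and>
        partition_fn mu \<beta> N = (\<integral>x. x ^ N \<partial>\<nu>))"
proof -
  interpret rmu mu by (rule rmu.intro[OF assms])
  obtain \<nu> where rd: "real_distribution \<nu>" and supp: "AE x in \<nu>. \<bar>x\<bar> \<le> Rb \<beta>"
    and st: "\<And>z. Im z > 0 \<Longrightarrow> stieltjes \<nu> z = 1 / Dz \<beta> z"
    using exists_nu[of \<beta>] by blast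
  interpret \<nu>: real_distribution \<nu> by (rule rd)
  have hz_eq: "(\<integral>x. z * complex_of_real x / (1 - z - complex_of_real x) \<partial>mu) = (\<integral>x. hz z x \<partial>mu)" for z
    unfolding hz_def ..
  show ?thesis
  proof (intro exI[of _ \<nu>] conjI allI impI)
    show "prob_space \<nu>" by (rule \<nu>.prob_space_axioms)
    show "sets \<nu> = sets borel" by (rule \<nu>.events_eq_borel)
    show "integrable \<nu> (\<lambda>x. x ^ N)" for N using moments[OF rd supp st] by blast
    show "partition_fn mu \<beta> N = (\<integral>x. x ^ N \<partial>\<nu>)" for N using moments[OF rd supp st] by blast
  next
    fix z :: complex assume z: "Im z > 0"
    show "stieltjes \<nu> z = inverse (- z - exp (complex_of_real \<beta>) *
           (\<integral>x. z * complex_of_real x / (1 - z - complex_of_real x) \<partial>mu))"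
      unfolding hz_eq st[OF z] Dz_def by (simp add: inverse_eq_divide)
  next
    fix z :: complex assume z: "Im z > 0"
    define e where "e = exp (complex_of_real \<beta>)"
    define s where "s = stieltjes mu (1 - z)"
    have znz: "z \<noteq> 0" using z by auto
    have z1: "1 - z \<noteq> 0" using z by (auto simp: complex_eq_iff)
    have Dnz: "Dz \<beta> z \<noteq> 0" by (rule Dz_nz[OF z])
    have De: "Dz \<beta> z = - z + e * z + e * z * (1 - z) * s"
      unfolding Dz_def hz_int[OF z] e_def s_def by (simp add: algebra_simps)
    have X: "e * s - (1 - e) / (1 - z) = Dz \<beta> z / (z * (1 - z))"
      unfolding De using znz z1 by (simp add: field_simps)
    have "1 / Dz \<beta> z * (e * s - (1 - e) / (1 - z)) = 1 / (z * (1 - z))"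
      unfolding X using Dnz by simp
    then show "stieltjes \<nu> z * (exp (complex_of_real \<beta>) * stieltjes mu (1 - z)
                           - (1 - exp (complex_of_real \<beta>)) / (1 - z)) = 1 / (z * (1 - z))"
      by (simp only: st[OF z] e_def s_def)
  qed
qed


end
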